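(* For every $k\ge0$ and $\delta\in\mathbb{R}$, the operator $X:\mathcal{S}^k_\delta\to\mathcal{S}^{k+1}_{\delta+\frac1{n+1}}$ commutes with the action of the Lie algebra $sp(2n+2)$, i.e. $X\circ L_Z=L_Z\circ X$ for all $Z\in sp(2n+2)$. It does not commute with the action of $\mathcal{C}(\mathbb{R}^{2n+1})$ unless $k=0$ (for $k\ge1$ there is $Z\in\mathcal{C}(\mathbb{R}^{2n+1})$, e.g. the contact vector field associated with the function $(q^1)^3$, with $X\circ L_Z\neq L_Z\circ X$).
   Context: Let $n\ge1$, $M=\mathbb{R}^{2n+1}$ with coordinates $x=(q^1,\dots,q^n,p^1,\dots,p^n,t)$ and contact form $\alpha=\frac12\big(\sum_{i=1}^n(p^idq^i-q^idp^i)-dt\big)$. $\mathcal{C}(M)=\{Z\in\mathrm{Vect}(M):L_Z\alpha=f_Z\alpha\text{ for some smooth }f_Z\}$. The projective algebra $sl(2n+2)\subset\mathrm{Vect}(M)$ is spanned by constant vector fields, linear vector fields, and the quadratic fields $\eta(x)\mathcal{E}$ with $\eta$ a linear form and $\mathcal{E}=\sum_jx^j\partial_{x^j}$ the Euler field; $sp(2n+2):=\mathcal{C}(M)\cap sl(2n+2)$. For $\delta\in\mathbb{R}$, $\mathcal{S}^k_\delta$ is the space of smooth symmetric contravariant $k$-tensor fields with coefficients in $\delta$-densities, identified with smooth functions $S(x,\xi)$ homogeneous polynomial of degree $k$ in $\xi=(\xi_{q^1},\dots,\xi_{q^n},\xi_{p^1},\dots,\xi_{p^n},\xi_t)$; a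 vector field $Y=\sum_jY^j\partial_{x^j}$ acts by $L_YS=\sum_jY^j\partial_{x^j}S+\delta(\sum_j\partial_{x^j}Y^j)S-\sum_{j,l}(\partial_{x^l}Y^j)\xi_j\partial_{\xi_l}S$. Let $E_s=\sum_i(p^i\partial_{p^i}+q^i\partial_{q^i})$, $\langle E_s,\xi\rangle=\sum_i(p^i\xi_{p^i}+q^i\xi_{q^i})$, $D(S)=\sum_i(\xi_{q^i}\partial_{p^i}S-\xi_{p^i}\partial_{q^i}S)+\xi_tE_s(S)-\langle E_s,\xi\rangle\partial_tS$. The Hamiltonian operator is $X(S)=D(S)+a(k,\delta)\xi_tS$ for $S\in\mathcal{S}^k_\delta$, with $a(k,\delta)=2(n+1)\delta-k$. The contact vector field associated with a function $f$ is $X(f)$ for $f$ viewed as a $-\frac1{n+1}$-density (i.e. the $k=0$, $\delta=-\frac1{n+1}$ case of $X$, read as a vector field via $\xi$-linearity). *)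

theory Defs
  imports "HOL-Analysis.Analysis"
begin

text \<open>Coordinates of M = R^(2n+1): the index type is 'n + ('n + unit), where
  CARD('n) = n; Inl i is q^i, Inr (Inl i) is p^i, Inr (Inr ()) is t.\<close>

type_synonym 'n idx = "'n + 'n + unit"

definition qc :: "'n \<Rightarrow> 'n idx" where "qc i = Inl i"
definition pc :: "'n \<Rightarrow> 'n idx" where "pc i = Inr (Inl i)"
definition tc :: "'n idx" where "tc = Inr (Inr ())"

definition pd :: "'i::finite \<Rightarrow> (real^'i \<Rightarrow> real) \<Rightarrow> real^'i \<Rightarrow> real" where
  "pd j F x = deriv (\<lambda>s. F (x + s *\<^sub>R axis j 1)) 0"

definition iter_pd :: "'i::finite list \<Rightarrow> (real^'i \<Rightarrow> real) \<Rightarrow> real^'i \<Rightarrow> real" where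
  "iter_pd js F = foldr pd js F"

definition smooth_fun :: "(real^'i::finite \<Rightarrow> real) \<Rightarrow> bool" where
  "smooth_fun F \<longleftrightarrow> (\<forall>js x. iter_pd js F differentiable (at x))"

definition smooth_vf :: "(real^'i::finite \<Rightarrow> real^'i) \<Rightarrow> bool" where
  "smooth_vf Y \<longleftrightarrow> (\<forall>j. smooth_fun (\<lambda>x. Y x $ j))"

fun hom_poly :: "nat \<Rightarrow> (real^'i::finite \<Rightarrow> real) \<Rightarrow> bool" where
  "hom_poly 0 f \<longleftrightarrow> (\<exists>c. f = (\<lambda>\<xi>. c))"
| "hom_poly (Suc k) f \<longleftrightarrow>
     (\<exists>g. (\<forall>j. hom_poly k (g j)) \<and> f = (\<lambda>\<xi>. \<Sum>j\<in>UNIV. \<xi> $ j * g j \<xi>))"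

text \<open>Elements of S^k_delta (as functions S x xi); the density weight only enters the action.\<close>
definition symbol :: "nat \<Rightarrow> (real^'i::finite \<Rightarrow> real^'i \<Rightarrow> real) \<Rightarrow> bool" where
  "symbol k S \<longleftrightarrow> (\<forall>\<xi>. smooth_fun (\<lambda>x. S x \<xi>)) \<and> (\<forall>x. hom_poly k (S x))"

definition Lder :: "real \<Rightarrow> (real^'i::finite \<Rightarrow> real^'i) \<Rightarrow> (real^'i \<Rightarrow> real^'i \<Rightarrow> real)
    \<Rightarrow> real^'i \<Rightarrow> real^'i \<Rightarrow> real" where
  "Lder \<delta> Y S x \<xi> =
     (\<Sum>j\<in>UNIV. Y x $ j * pd j (\<lambda>y. S y \<xi>) x)
     + \<delta> * (\<Sum>j\<in>UNIV. pd j (\<lambda>y. Y y $ j) x) * S x \<xi>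
     - (\<Sum>j\<in>UNIV. \<Sum>l\<in>UNIV. pd l (\<lambda>y. Y y $ j) x * \<xi> $ j * pd l (S x) \<xi>)"

definition alpha :: "real^('n::finite idx) \<Rightarrow> 'n idx \<Rightarrow> real" where
  "alpha x l = (case l of Inl i \<Rightarrow> x $ pc i / 2
                        | Inr (Inl i) \<Rightarrow> - (x $ qc i) / 2
                        | Inr (Inr _) \<Rightarrow> - 1 / 2)"

definition Lie_form :: "(real^'i::finite \<Rightarrow> real^'i) \<Rightarrow> (real^'i \<Rightarrow> 'i \<Rightarrow> real)
    \<Rightarrow> real^'i \<Rightarrow> 'i \<Rightarrow> real" where
  "Lie_form Z a x l = (\<Sum>j\<in>UNIV. Z x $ j * pd j (\<lambda>y. a y l) x)
                      + (\<Sum>j\<in>UNIV. a x j * pd l (\<lambda>y. Z y $ j) x)"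

definition contact_vf :: "(real^('n::finite idx) \<Rightarrow> real^('n idx)) \<Rightarrow> bool" where
  "contact_vf Z \<longleftrightarrow> smooth_vf Z \<and>
     (\<exists>f. smooth_fun f \<and> (\<forall>x l. Lie_form Z alpha x l = f x * alpha x l))"

text \<open>sl(2n+2): span of constant, linear and quadratic fields eta(x) E.\<close>
definition sl_vf :: "(real^'i::finite \<Rightarrow> real^'i) \<Rightarrow> bool" where
  "sl_vf Z \<longleftrightarrow> (\<exists>(c::real^'i) (A::real^'i^'i) (\<eta>::real^'i).
      \<forall>x. Z x = c + A *v x + (\<eta> \<bullet> x) *\<^sub>R x)"

definition sp_vf :: "(real^('n::finite idx) \<Rightarrow> real^('n idx)) \<Rightarrow> bool" where
  "sp_vf Z \<longleftrightarrow> contact_vf Z \<and> sl_vf Z"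

definition Dop :: "(real^('n::finite idx) \<Rightarrow> real^('n idx) \<Rightarrow> real)
    \<Rightarrow> real^('n idx) \<Rightarrow> real^('n idx) \<Rightarrow> real" where
  "Dop S x \<xi> =
     (\<Sum>i\<in>UNIV. \<xi> $ qc i * pd (pc i) (\<lambda>y. S y \<xi>) x - \<xi> $ pc i * pd (qc i) (\<lambda>y. S y \<xi>) x)
     + \<xi> $ tc * (\<Sum>i\<in>UNIV. x $ pc i * pd (pc i) (\<lambda>y. S y \<xi>) x
                            + x $ qc i * pd (qc i) (\<lambda>y. S y \<xi>) x)
     - (\<Sum>i\<in>UNIV. x $ pc i * \<xi> $ pc i + x $ qc i * \<xi> $ qc i) * pd tc (\<lambda>y. S y \<xi>) x"

definition Xop :: "nat \<Rightarrow> real \<Rightarrow> (real^('n::finite idx) \<Rightarrow> real^('n idx) \<Rightarrow> real)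
    \<Rightarrow> real^('n idx) \<Rightarrow> real^('n idx) \<Rightarrow> real" where
  "Xop k \<delta> S x \<xi> = Dop S x \<xi> + (2 * (real CARD('n) + 1) * \<delta> - real k) * \<xi> $ tc * S x \<xi>"

text \<open>Contact vector field of a function f: X(f) for f a -1/(n+1)-density, read off by
  xi-linearity.\<close>
definition cvf :: "(real^('n::finite idx) \<Rightarrow> real) \<Rightarrow> real^('n idx) \<Rightarrow> real^('n idx)" where
  "cvf f x = (\<chi> j. Xop 0 (- 1 / (real CARD('n) + 1)) (\<lambda>y \<xi>. f y) x (axis j 1))"

end

theory Submission
  imports Defs "HOL-Computational_Algebra.Polynomial"
begin

lemma sum_idx:
  fixes f :: "'n::finite idx \<Rightarrow> 'a::comm_monoid_add"
  shows "(\<Sum>j\<in>UNIV. f j) = (\<Sum>i\<in>UNIV. f (qc i)) + (\<Sum>i\<in>UNIV. f (pc i)) + f tc"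
proof -
  have "(\<Sum>j\<in>UNIV. f j) = (\<Sum>j\<in>(UNIV::'n set) <+> (UNIV::('n + unit) set). f j)"
    by simp
  also have "\<dots> = (\<Sum>i\<in>UNIV. f (Inl i)) + (\<Sum>j\<in>(UNIV::'n set) <+> (UNIV::unit set). f (Inr j))"
    by (subst sum.Plus) auto
  also have "(\<Sum>j\<in>(UNIV::'n set) <+> (UNIV::unit set). f (Inr j)) = (\<Sum>i\<in>UNIV. f (Inr (Inl i))) + (\<Sum>u\<in>UNIV. f (Inr (Inr u)))"
    by (subst sum.Plus) auto
  also have "(\<Sum>u\<in>(UNIV::unit set). f (Inr (Inr u))) = f tc"
    by (simp add: tc_def UNIV_unit)
  finally show ?thesis by (simp add: qc_def pc_def add.assoc)
qed

lemma idx_cases: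
  obtains i where "j = qc i" | i where "j = pc i" | "j = tc"
proof (cases j)
  case (Inl i) then show ?thesis using that(1) by (simp add: qc_def)
next
  case (Inr r) then show ?thesis
  proof (cases r)
    case (Inl i) then show ?thesis using that(2) Inr by (simp add: pc_def)
  next
    case (Inr u) then show ?thesis using that(3) \<open>j = Inr r\<close> by (simp add: tc_def)
  qed
qed

lemma idx_distinct [simp]:
  "qc i \<noteq> pc i'" "pc i \<noteq> qc i'" "qc i \<noteq> tc" "tc \<noteq> qc i" "pc i \<noteq> tc" "tc \<noteq> pc i"
  "qc i = qc i' \<longleftrightarrow> i = i'" "pc i = pc i' \<longleftrightarrow> i = i'"
  by (auto simp: qc_def pc_def tc_def)

section \<open>Directional derivatives\<close>

definition ldiff :: "'i::finite \<Rightarrow> (real^'i \<Rightarrow> real) \<Rightarrow> real^'i \<Rightarrow> bool" where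
  "ldiff j F x \<longleftrightarrow> (\<lambda>s. F (x + s *\<^sub>R axis j 1)) field_differentiable (at 0)"

lemma pd_add: "ldiff j F x \<Longrightarrow> ldiff j G x \<Longrightarrow> pd j (\<lambda>y. F y + G y) x = pd j F x + pd j G x"
  unfolding ldiff_def pd_def by simp
lemma pd_diff: "ldiff j F x \<Longrightarrow> ldiff j G x \<Longrightarrow> pd j (\<lambda>y. F y - G y) x = pd j F x - pd j G x"
  unfolding ldiff_def pd_def by simp
lemma pd_minus: "ldiff j F x \<Longrightarrow> pd j (\<lambda>y. - F y) x = - pd j F x"
  unfolding ldiff_def pd_def by simp
lemma pd_mult: "ldiff j F x \<Longrightarrow> ldiff j G x \<Longrightarrow> pd j (\<lambda>y. F y * G y) x = pd j F x * G x + F x * pd j G x"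
  unfolding ldiff_def pd_def by simp
lemma pd_const [simp]: "pd j (\<lambda>y. c) x = 0"
  unfolding pd_def by simp
lemma pd_sum: "(\<And>i. i \<in> A \<Longrightarrow> ldiff j (F i) x) \<Longrightarrow> pd j (\<lambda>y. \<Sum>i\<in>A. F i y) x = (\<Sum>i\<in>A. pd j (F i) x)"
  unfolding ldiff_def pd_def
proof -
  assume a: "\<And>i. i \<in> A \<Longrightarrow> (\<lambda>s. F i (x + s *\<^sub>R axis j 1)) field_differentiable at 0"
  have "((\<lambda>s. \<Sum>i\<in>A. F i (x + s *\<^sub>R axis j 1)) has_field_derivative (\<Sum>i\<in>A. deriv (\<lambda>s. F i (x + s *\<^sub>R axis j 1)) 0)) (at 0)"
    by (rule DERIV_sum) (use a in \<open>simp add: DERIV_deriv_iff_field_differentiable\<close>)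
  then show "deriv (\<lambda>s. \<Sum>i\<in>A. F i (x + s *\<^sub>R axis j 1)) 0 = (\<Sum>i\<in>A. deriv (\<lambda>s. F i (x + s *\<^sub>R axis j 1)) 0)"
    by (rule DERIV_imp_deriv)
qed

lemma ldiff_add: "ldiff j F x \<Longrightarrow> ldiff j G x \<Longrightarrow> ldiff j (\<lambda>y. F y + G y) x"
  unfolding ldiff_def by (rule field_differentiable_add)
lemma ldiff_diff: "ldiff j F x \<Longrightarrow> ldiff j G x \<Longrightarrow> ldiff j (\<lambda>y. F y - G y) x"
  unfolding ldiff_def by (rule field_differentiable_diff)
lemma ldiff_mult: "ldiff j F x \<Longrightarrow> ldiff j G x \<Longrightarrow> ldiff j (\<lambda>y. F y * G y) x"
  unfolding ldiff_def by (rule field_differentiable_mult)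
lemma ldiff_minus: "ldiff j F x \<Longrightarrow> ldiff j (\<lambda>y. - F y) x"
  unfolding ldiff_def by (rule field_differentiable_minus)
lemma ldiff_const [simp]: "ldiff j (\<lambda>y. c) x"
  unfolding ldiff_def by simp
lemma ldiff_sum: "(\<And>i. i \<in> A \<Longrightarrow> ldiff j (F i) x) \<Longrightarrow> ldiff j (\<lambda>y. \<Sum>i\<in>A. F i y) x"
  unfolding ldiff_def
proof (induction A rule: infinite_finite_induct)
  case (insert a A) then show ?case by (simp add: field_differentiable_add)
qed auto

lemma line_coord: "(x + s *\<^sub>R axis j 1) $ i = x $ i + (if i = j then s else 0)"
  by (simp add: axis_def)

lemma ldiff_coord [simp]: "ldiff j (\<lambda>y. y $ i) x"
  unfolding ldiff_def line_coord by (cases "i = j") (auto intro!: derivative_intros)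

lemma pd_coord [simp]: "pd j (\<lambda>y. y $ i) x = (if i = j then 1 else 0)"
  unfolding pd_def line_coord by (cases "i = j") auto

lemma has_derivative_line:
  assumes "(F has_derivative F') (at (y + s0 *\<^sub>R v))"
  shows "((\<lambda>s. F (y + s *\<^sub>R v)) has_real_derivative F' v) (at s0)"
proof -
  have "((\<lambda>s. y + s *\<^sub>R v) has_derivative (\<lambda>h. h *\<^sub>R v)) (at s0)"
    by (auto intro!: derivative_eq_intros)
  from has_derivative_compose[OF this assms]
  have "((\<lambda>s. F (y + s *\<^sub>R v)) has_derivative (\<lambda>h. F' (h *\<^sub>R v))) (at s0)" by (simp add: o_def)
  moreover have "linear F'" using assms has_derivative_linear by blast
  moreover have "(\<lambda>h. F' (h *\<^sub>R v)) = (*) (F' v)"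
    using \<open>linear F'\<close> by (auto simp: fun_eq_iff linear_cmul mult.commute)
  ultimately show ?thesis
    by (simp add: has_field_derivative_def)
qed

lemma pd_frechet:
  assumes "F differentiable (at x)"
  shows "pd j F x = frechet_derivative F (at x) (axis j 1)"
    and "ldiff j F x"
proof -
  have "(F has_derivative frechet_derivative F (at x)) (at x)"
    using assms frechet_derivative_works by blast
  then have d: "(F has_derivative frechet_derivative F (at x)) (at (x + 0 *\<^sub>R axis j 1))"
    by simp
  from has_derivative_line[OF d]
  have "((\<lambda>s. F (x + s *\<^sub>R axis j 1)) has_real_derivative frechet_derivative F (at x) (axis j 1)) (at 0)" .
  then show "pd j F x = frechet_derivative F (at x) (axis j 1)" "ldiff j F x"
    unfolding pd_def ldiff_def field_differentiable_def by (auto intro: DERIV_imp_deriv)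
qed

lemma pd_line_deriv:
  assumes "F differentiable (at (y + s0 *\<^sub>R axis j 1))"
  shows "((\<lambda>s. F (y + s *\<^sub>R axis j 1)) has_real_derivative pd j F (y + s0 *\<^sub>R axis j 1)) (at s0)"
  using has_derivative_line[OF frechet_derivative_works[THEN iffD1, OF assms]] pd_frechet(1)[OF assms]
  by simp

section \<open>Smooth functions\<close>

lemma iter_pd_snoc: "iter_pd (js @ [j]) F = iter_pd js (pd j F)"
  by (simp add: iter_pd_def)

lemma smooth_fun_iff:
  "smooth_fun F \<longleftrightarrow> (\<forall>x. F differentiable (at x)) \<and> (\<forall>j. smooth_fun (pd j F))"
proof
  assume "smooth_fun F"
  then show "(\<forall>x. F differentiable (at x)) \<and> (\<forall>j. smooth_fun (pd j F))"
    unfolding smooth_fun_def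
  proof (intro conjI allI)
    fix x
    have "iter_pd [] F differentiable (at x)" using \<open>smooth_fun F\<close> unfolding smooth_fun_def by blast
    then show "F differentiable (at x)" by (simp add: iter_pd_def)
  next
    fix j js x
    have "iter_pd (js @ [j]) F differentiable (at x)" using \<open>smooth_fun F\<close> unfolding smooth_fun_def by blast
    then show "iter_pd js (pd j F) differentiable (at x)" by (simp add: iter_pd_snoc)
  qed
next
  assume a: "(\<forall>x. F differentiable (at x)) \<and> (\<forall>j. smooth_fun (pd j F))"
  show "smooth_fun F" unfolding smooth_fun_def
  proof (intro allI)
    fix js x
    show "iter_pd js F differentiable (at x)"
    proof (cases js rule: rev_exhaust)
      case Nil then show ?thesis using a by (simp add: iter_pd_def)
    next
      case (snoc ys y) then show ?thesis using a by (simp add: iter_pd_snoc smooth_fun_def)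
    qed
  qed
qed

lemma smooth_diff: "smooth_fun F \<Longrightarrow> F differentiable (at x)"
  using smooth_fun_iff by blast
lemma smooth_pd: "smooth_fun F \<Longrightarrow> smooth_fun (pd j F)"
  using smooth_fun_iff by blast
lemma smooth_ldiff: "smooth_fun F \<Longrightarrow> ldiff j F x"
  using pd_frechet(2) smooth_diff by blast
lemma smooth_cont: "smooth_fun F \<Longrightarrow> continuous (at x) F"
  using differentiable_imp_continuous_within smooth_diff by blast

lemma smooth_coind:
  assumes "P F"
    and "\<And>G x. P G \<Longrightarrow> G differentiable (at x)"
    and "\<And>G j. P G \<Longrightarrow> P (pd j G)"
  shows "smooth_fun F"
proof -
  have "P (iter_pd js G)" if "P G" for js G
    using that by (induction js) (auto simp: iter_pd_def assms(3))
  then show ?thesis unfolding smooth_fun_def using assms(1,2) by blast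
qed

inductive gen :: "(real^'i::finite \<Rightarrow> real) \<Rightarrow> bool" where
  gen_base: "smooth_fun F \<Longrightarrow> gen F"
| gen_add: "gen F \<Longrightarrow> gen G \<Longrightarrow> gen (\<lambda>x. F x + G x)"
| gen_mult: "gen F \<Longrightarrow> gen G \<Longrightarrow> gen (\<lambda>x. F x * G x)"

lemma gen_diffble: "gen F \<Longrightarrow> F differentiable (at x)"
proof (induction rule: gen.induct)
  case (gen_base F) then show ?case by (rule smooth_diff)
next
  case (gen_add F G) then show ?case by (auto intro!: derivative_intros)
next
  case (gen_mult F G) then show ?case by (auto intro!: derivative_intros)
qed

lemma gen_pd: "gen F \<Longrightarrow> gen (pd j F)"
proof (induction rule: gen.induct)
  case (gen_base F) then show ?case by (simp add: gen.gen_base smooth_pd)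
next
  case (gen_add F G)
  have "pd j (\<lambda>x. F x + G x) = (\<lambda>x. pd j F x + pd j G x)"
  proof
    fix x show "pd j (\<lambda>x. F x + G x) x = pd j F x + pd j G x"
      by (rule pd_add[OF pd_frechet(2)[OF gen_diffble[OF \<open>gen F\<close>]] pd_frechet(2)[OF gen_diffble[OF \<open>gen G\<close>]]])
  qed
  then show ?case using gen_add by (simp add: gen.gen_add)
next
  case (gen_mult F G)
  have "pd j (\<lambda>x. F x * G x) = (\<lambda>x. pd j F x * G x + F x * pd j G x)"
  proof
    fix x show "pd j (\<lambda>x. F x * G x) x = pd j F x * G x + F x * pd j G x"
      by (rule pd_mult[OF pd_frechet(2)[OF gen_diffble[OF \<open>gen F\<close>]] pd_frechet(2)[OF gen_diffble[OF \<open>gen G\<close>]]])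
  qed
  then show ?case using gen_mult by (simp add: gen.gen_add gen.gen_mult gen.gen_base)
qed

lemma gen_smooth: "gen F \<Longrightarrow> smooth_fun F"
  by (rule smooth_coind[of gen]) (assumption, erule gen_diffble, erule gen_pd)

lemma smooth_add [intro]: "smooth_fun F \<Longrightarrow> smooth_fun G \<Longrightarrow> smooth_fun (\<lambda>x. F x + G x)"
  by (rule gen_smooth, rule gen_add, (rule gen_base, assumption)+)
lemma smooth_mult [intro]: "smooth_fun F \<Longrightarrow> smooth_fun G \<Longrightarrow> smooth_fun (\<lambda>x. F x * G x)"
  by (rule gen_smooth, rule gen_mult, (rule gen_base, assumption)+)

lemma pd_const_fun: "pd j (\<lambda>y. c) = (\<lambda>y. 0)"
  by (simp add: fun_eq_iff)
lemma pd_coord_fun: "pd j (\<lambda>y. y $ i) = (\<lambda>y. if i = j then 1 else 0)"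
  by (simp add: fun_eq_iff)

lemma smooth_const [intro, simp]: "smooth_fun (\<lambda>x. c)"
  by (rule smooth_coind[of "\<lambda>F. \<exists>c. F = (\<lambda>x. c)"]) (auto simp: pd_const_fun)

lemma smooth_coord [intro, simp]: "smooth_fun (\<lambda>x. x $ i)"
proof (rule smooth_coind[of "\<lambda>F. (\<exists>c. F = (\<lambda>x. c)) \<or> (\<exists>i. F = (\<lambda>x. x $ i))"])
  fix G :: "real^'a \<Rightarrow> real" and j
  assume "(\<exists>c. G = (\<lambda>x. c)) \<or> (\<exists>i. G = (\<lambda>x. x $ i))"
  then show "(\<exists>c. pd j G = (\<lambda>x. c)) \<or> (\<exists>i. pd j G = (\<lambda>x. x $ i))"
    by (auto simp: pd_const_fun pd_coord_fun)
next
  fix G :: "real^'a \<Rightarrow> real" and x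
  assume "(\<exists>c. G = (\<lambda>x. c)) \<or> (\<exists>i. G = (\<lambda>x. x $ i))"
  then show "G differentiable (at x)"
    by (elim disjE exE) (auto intro: bounded_linear_imp_differentiable bounded_linear_vec_nth)
qed auto

lemma smooth_cmult [intro]: "smooth_fun F \<Longrightarrow> smooth_fun (\<lambda>x. c * F x)"
  by (intro smooth_mult smooth_const)
lemma smooth_minus [intro]: "smooth_fun F \<Longrightarrow> smooth_fun (\<lambda>x. - F x)"
  using smooth_cmult[of F "-1"] by simp
lemma smooth_diff' [intro]: "smooth_fun F \<Longrightarrow> smooth_fun G \<Longrightarrow> smooth_fun (\<lambda>x. F x - G x)"
  using smooth_add[of F "\<lambda>x. - G x"] by (simp add: smooth_minus)
lemma smooth_sum [intro]: "(\<And>i. i \<in> A \<Longrightarrow> smooth_fun (F i)) \<Longrightarrow> smooth_fun (\<lambda>x. \<Sum>i\<in>A. F i x)"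
proof (induction A rule: infinite_finite_induct)
  case (insert a A)
  have e: "(\<lambda>x. \<Sum>i\<in>insert a A. F i x) = (\<lambda>x. F a x + (\<Sum>i\<in>A. F i x))"
    using insert(1,2) by (simp add: sum.insert)
  have "smooth_fun (F a)" using insert(4) by blast
  moreover have "smooth_fun (\<lambda>x. \<Sum>i\<in>A. F i x)" using insert(3,4) by blast
  ultimately show ?case unfolding e by (rule smooth_add)
qed (simp_all add: sum.infinite)
lemma smooth_pow [intro]: "smooth_fun F \<Longrightarrow> smooth_fun (\<lambda>x. F x ^ m)"
proof (induction m)
  case (Suc m)
  have "smooth_fun (\<lambda>x. F x * F x ^ m)" using Suc by (intro smooth_mult)
  then show ?case by (simp only: power_Suc)
qed (simp only: power_0 smooth_const)


lemma mvt_dir: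
  assumes "\<And>z. G differentiable (at z)" and "h > 0"
  shows "\<exists>a. 0 < a \<and> a < h \<and> G (y + h *\<^sub>R axis j 1) - G y = h * pd j G (y + a *\<^sub>R axis j 1)"
proof -
  have "\<And>s. 0 \<le> s \<Longrightarrow> s \<le> h \<Longrightarrow> ((\<lambda>s. G (y + s *\<^sub>R axis j 1)) has_real_derivative pd j G (y + s *\<^sub>R axis j 1)) (at s)"
    using assms(1) by (auto intro!: pd_line_deriv)
  from MVT2[OF assms(2) this] obtain a where "0 < a" "a < h"
    "G (y + h *\<^sub>R axis j 1) - G (y + 0 *\<^sub>R axis j 1) = (h - 0) * pd j G (y + a *\<^sub>R axis j 1)"
    by blast
  then show ?thesis by auto
qed

lemma clairaut_aux:
  assumes F: "smooth_fun F" and h: "h > 0"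
  shows "\<exists>a b. 0 < a \<and> a < h \<and> 0 < b \<and> b < h \<and>
    F (x + h *\<^sub>R axis i 1 + h *\<^sub>R axis j 1) - F (x + h *\<^sub>R axis i 1) - F (x + h *\<^sub>R axis j 1) + F x
      = h * h * pd j (pd i F) (x + a *\<^sub>R axis i 1 + b *\<^sub>R axis j 1)"
proof -
  define u where "u = (axis i 1 :: real^'a)"
  define v where "v = (axis j 1 :: real^'a)"
  define \<psi> where "\<psi> s = F (x + h *\<^sub>R v + s *\<^sub>R u) - F (x + s *\<^sub>R u)" for s
  have dF: "\<And>z. F differentiable (at z)" using F smooth_diff by blast
  have "\<And>s. 0 \<le> s \<Longrightarrow> s \<le> h \<Longrightarrow> (\<psi> has_real_derivative
      (pd i F (x + h *\<^sub>R v + s *\<^sub>R u) - pd i F (x + s *\<^sub>R u))) (at s)"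
    unfolding \<psi>_def u_def using dF by (auto intro!: derivative_eq_intros pd_line_deriv)
  from MVT2[OF h this] obtain a where a: "0 < a" "a < h"
    "\<psi> h - \<psi> 0 = (h - 0) * (pd i F (x + h *\<^sub>R v + a *\<^sub>R u) - pd i F (x + a *\<^sub>R u))"
    by blast
  have dG: "\<And>z. pd i F differentiable (at z)" using F smooth_diff smooth_pd by blast
  obtain b where b: "0 < b" "b < h"
    "pd i F (x + a *\<^sub>R u + h *\<^sub>R v) - pd i F (x + a *\<^sub>R u) = h * pd j (pd i F) (x + a *\<^sub>R u + b *\<^sub>R v)"
    using mvt_dir[OF dG h, of "x + a *\<^sub>R u" j] unfolding v_def by blast
  have "F (x + h *\<^sub>R u + h *\<^sub>R v) - F (x + h *\<^sub>R u) - F (x + h *\<^sub>R v) + F x = \<psi> h - \<psi> 0"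
    unfolding \<psi>_def by (simp add: algebra_simps)
  also have "\<dots> = h * h * pd j (pd i F) (x + a *\<^sub>R u + b *\<^sub>R v)"
    using a(3) b(3) by (simp add: algebra_simps)
  finally show ?thesis using a b unfolding u_def v_def by blast
qed

lemma clairaut:
  assumes F: "smooth_fun F"
  shows "pd i (pd j F) x = pd j (pd i F) x"
proof (rule ccontr)
  define A where "A = pd j (pd i F)"
  define B where "B = pd i (pd j F)"
  assume ne: "pd i (pd j F) x \<noteq> pd j (pd i F) x"
  define e where "e = \<bar>A x - B x\<bar> / 2"
  have e: "e > 0" using ne unfolding e_def A_def B_def by auto
  have cA: "continuous (at x) A" unfolding A_def by (intro smooth_cont smooth_pd F)
  have cB: "continuous (at x) B" unfolding B_def by (intro smooth_cont smooth_pd F)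
  obtain d1 where d1: "d1 > 0" "\<And>y. dist y x < d1 \<Longrightarrow> dist (A y) (A x) < e"
    using cA e unfolding continuous_at_eps_delta by blast
  obtain d2 where d2: "d2 > 0" "\<And>y. dist y x < d2 \<Longrightarrow> dist (B y) (B x) < e"
    using cB e unfolding continuous_at_eps_delta by blast
  define h where "h = min d1 d2 / 4"
  have h: "h > 0" using d1 d2 unfolding h_def by auto
  obtain a b where ab: "0 < a" "a < h" "0 < b" "b < h"
    "F (x + h *\<^sub>R axis i 1 + h *\<^sub>R axis j 1) - F (x + h *\<^sub>R axis i 1) - F (x + h *\<^sub>R axis j 1) + F x
      = h * h * A (x + a *\<^sub>R axis i 1 + b *\<^sub>R axis j 1)"
    using clairaut_aux[OF F h, of x i j] unfolding A_def by blast
  obtain a' b' where ab': "0 < a'" "a' < h" "0 < b'" "b' < h"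
    "F (x + h *\<^sub>R axis j 1 + h *\<^sub>R axis i 1) - F (x + h *\<^sub>R axis j 1) - F (x + h *\<^sub>R axis i 1) + F x
      = h * h * B (x + a' *\<^sub>R axis j 1 + b' *\<^sub>R axis i 1)"
    using clairaut_aux[OF F h, of x j i] unfolding B_def by blast
  have "h * h * A (x + a *\<^sub>R axis i 1 + b *\<^sub>R axis j 1) = h * h * B (x + a' *\<^sub>R axis j 1 + b' *\<^sub>R axis i 1)"
    using ab(5) ab'(5) by (simp add: algebra_simps)
  then have eqAB: "A (x + a *\<^sub>R axis i 1 + b *\<^sub>R axis j 1) = B (x + a' *\<^sub>R axis j 1 + b' *\<^sub>R axis i 1)"
    using h by simp
  have nrm: "dist (x + s *\<^sub>R axis i 1 + t *\<^sub>R axis j 1) x < 4 * h" if "0 < s" "s < h" "0 < t" "t < h" for s t i j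
  proof -
    have "dist (x + s *\<^sub>R axis i 1 + t *\<^sub>R axis j 1) x = norm (s *\<^sub>R axis i 1 + t *\<^sub>R (axis j 1 :: real^'a))"
      by (simp add: dist_norm)
    also have "\<dots> \<le> norm (s *\<^sub>R (axis i 1 :: real^'a)) + norm (t *\<^sub>R (axis j 1 :: real^'a))"
      by (rule norm_triangle_ineq)
    also have "\<dots> = s + t" using that by simp
    finally show ?thesis using that by simp
  qed
  have "dist (A (x + a *\<^sub>R axis i 1 + b *\<^sub>R axis j 1)) (A x) < e"
    using d1(2) nrm[OF ab(1-4), of i j] unfolding h_def by auto
  moreover have "dist (B (x + a' *\<^sub>R axis j 1 + b' *\<^sub>R axis i 1)) (B x) < e"
    using d2(2) nrm[OF ab'(1-4), of j i] unfolding h_def by auto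
  ultimately have "\<bar>A x - B x\<bar> < 2 * e"
    using eqAB unfolding dist_real_def by linarith
  then show False unfolding e_def by simp
qed


section \<open>Homogeneous polynomials along lines\<close>

lemma hom_poly_line:
  "hom_poly k f \<Longrightarrow> \<exists>p. degree p \<le> k \<and> (\<forall>s. f (\<xi> + s *\<^sub>R v) = poly p s)"
proof (induction k arbitrary: f)
  case 0
  then obtain c where "f = (\<lambda>\<xi>. c)" by auto
  then show ?case by (intro exI[of _ "[:c:]"]) auto
next
  case (Suc k)
  then obtain g where g: "\<forall>j. hom_poly k (g j)" "f = (\<lambda>\<xi>. \<Sum>j\<in>UNIV. \<xi> $ j * g j \<xi>)" by auto
  have "\<forall>j. \<exists>p. degree p \<le> k \<and> (\<forall>s. g j (\<xi> + s *\<^sub>R v) = poly p s)"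
    using Suc.IH g(1) by blast
  then obtain P where "\<forall>j. degree (P j) \<le> k \<and> (\<forall>s. g j (\<xi> + s *\<^sub>R v) = poly (P j) s)"
    using choice[of "\<lambda>j p. degree p \<le> k \<and> (\<forall>s. g j (\<xi> + s *\<^sub>R v) = poly p s)"] by blast
  then have P: "\<And>j. degree (P j) \<le> k" "\<And>j s. g j (\<xi> + s *\<^sub>R v) = poly (P j) s"
    by auto
  define q where "q = (\<Sum>j\<in>UNIV. [:\<xi> $ j, v $ j:] * P j)"
  have "degree q \<le> Suc k"
    unfolding q_def
  proof (rule degree_sum_le)
    fix j
    have "degree ([:\<xi> $ j, v $ j:] * P j) \<le> degree [:\<xi> $ j, v $ j:] + degree (P j)"
      by (rule degree_mult_le)
    also have "\<dots> \<le> 1 + k" using P(1)[of j] by (simp add: degree_pCons_le)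
    finally show "degree ([:\<xi> $ j, v $ j:] * P j) \<le> Suc k" by simp
  qed simp
  moreover have "f (\<xi> + s *\<^sub>R v) = poly q s" for s
    unfolding g(2) q_def poly_sum using P(2) by (simp add: algebra_simps)
  ultimately show ?case by blast
qed

section \<open>Lagrange interpolation\<close>

definition lagp :: "nat \<Rightarrow> nat \<Rightarrow> real poly" where
  "lagp k m = (\<Prod>i\<in>{0..k}-{m}. smult (1 / (real m - real i)) [:- real i, 1:])"

lemma lagp_degree: "m \<le> k \<Longrightarrow> degree (lagp k m) \<le> k"
proof -
  assume m: "m \<le> k"
  have "degree (lagp k m) \<le> sum (degree \<circ> (\<lambda>i. smult (1 / (real m - real i)) [:- real i, 1:])) ({0..k}-{m})"
    unfolding lagp_def by (rule degree_prod_sum_le) simp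
  also have "\<dots> \<le> sum (\<lambda>i. 1) ({0..k}-{m})"
    by (rule sum_mono) (auto intro: order.trans[OF degree_smult_le])
  also have "\<dots> = k" using m by simp
  finally show ?thesis .
qed

lemma lagp_node:
  assumes "m \<le> k" "j \<le> k"
  shows "poly (lagp k m) (real j) = (if j = m then 1 else 0)"
proof (cases "j = m")
  case True
  have "poly (smult (1 / (real m - real i)) [:- real i, 1:]) (real m) = 1" if "i \<in> {0..k}-{m}" for i
  proof -
    have nz: "real m - real i \<noteq> 0" using that by auto
    have c1: "c \<noteq> 0 \<Longrightarrow> 1 / c * c = (1::real)" for c by simp
    have "poly (smult (1 / (real m - real i)) [:- real i, 1:]) (real m) = 1 / (real m - real i) * (- real i + real m * (1 + real m * 0))"
      by (simp only: poly_smult poly_pCons poly_0)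
    also have "- real i + real m * (1 + real m * 0) = real m - real i" by simp
    finally show ?thesis using c1[OF nz] by simp
  qed
  then have "(\<Prod>i\<in>{0..k}-{m}. poly (smult (1 / (real m - real i)) [:- real i, 1:]) (real m)) = 1"
    by (intro prod.neutral ballI)
  then show ?thesis unfolding lagp_def poly_prod True by (simp only: if_P[OF refl])
next
  case False
  have j: "j \<in> {0..k}-{m}" using assms False by auto
  have "poly (smult (1 / (real m - real j)) [:- real j, 1:]) (real j) = 0" by simp
  then have "(\<Prod>i\<in>{0..k}-{m}. poly (smult (1 / (real m - real i)) [:- real i, 1:]) (real j)) = 0"
    using j by (intro prod_zero) auto
  then show ?thesis unfolding lagp_def poly_prod using False by simp
qed

lemma interp:
  fixes p :: "real poly"
  assumes "degree p \<le> k"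
  shows "poly p s = (\<Sum>m\<le>k. poly p (real m) * poly (lagp k m) s)"
proof -
  define q where "q = p - (\<Sum>m\<le>k. smult (poly p (real m)) (lagp k m))"
  have dq: "degree q \<le> k" unfolding q_def
    by (intro degree_diff_le assms degree_sum_le) (auto intro: order.trans[OF degree_smult_le] lagp_degree)
  have roots: "poly q (real j) = 0" if "j \<le> k" for j
  proof -
    have "(\<Sum>m\<le>k. poly p (real m) * poly (lagp k m) (real j)) = (\<Sum>m\<le>k. if m = j then poly p (real j) else 0)"
      by (rule sum.cong) (use that in \<open>auto simp: lagp_node\<close>)
    also have "\<dots> = poly p (real j)" using that by simp
    finally show ?thesis unfolding q_def by (simp add: poly_sum)
  qed
  have "q = 0"
  proof (rule ccontr)
    assume "q \<noteq> 0"
    then have c: "card {x. poly q x = 0} \<le> k" using card_poly_roots_bound dq order.trans by blast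
    have sub: "real ` {..k} \<subseteq> {x. poly q x = 0}" using roots by auto
    have "finite {x. poly q x = 0}" using \<open>q \<noteq> 0\<close> poly_roots_finite by blast
    then have "card (real ` {..k}) \<le> card {x. poly q x = 0}" using sub card_mono by blast
    moreover have "card (real ` {..k}) = Suc k" by (simp add: card_image)
    ultimately show False using c by simp
  qed
  then have "p = (\<Sum>m\<le>k. smult (poly p (real m)) (lagp k m))" unfolding q_def by simp
  then have "poly p s = poly (\<Sum>m\<le>k. smult (poly p (real m)) (lagp k m)) s"
    by (rule arg_cong[where f="\<lambda>p. poly p s"])
  then show ?thesis by (simp add: poly_sum)
qed

definition cL :: "nat \<Rightarrow> nat \<Rightarrow> real" where
  "cL k m = deriv (poly (lagp k m)) 0"

lemma poly_fd [simp]: "poly p field_differentiable (at x)"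
  by (simp add: field_differentiable_def) (meson poly_DERIV)

lemma poly_fd' [simp]: "(\<lambda>s. poly p s * c) field_differentiable (at x)"
  by (intro field_differentiable_mult poly_fd field_differentiable_const)

lemma deriv_poly_sum:
  "deriv (\<lambda>s. \<Sum>m\<le>k. poly (lagp k m) s * c m) 0 = (\<Sum>m\<le>k. cL k m * c m)"
proof -
  have "deriv (\<lambda>s. \<Sum>m\<le>k. poly (lagp k m) s * c m) 0 = (\<Sum>m\<le>k. deriv (\<lambda>s. poly (lagp k m) s * c m) 0)"
    by (rule deriv_sum) simp
  also have "\<dots> = (\<Sum>m\<le>k. cL k m * c m)"
    by (rule sum.cong) (simp_all add: cL_def deriv_cmult_right)
  finally show ?thesis .
qed

lemma pd_cmult: "ldiff j F x \<Longrightarrow> pd j (\<lambda>y. c * F y) x = c * pd j F x"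
  by (simp add: pd_mult)

section \<open>Derivatives of symbols in the fibre variable\<close>

lemma hom_line_interp:
  assumes "hom_poly k f"
  shows "f (\<xi> + s *\<^sub>R v) = (\<Sum>m\<le>k. poly (lagp k m) s * f (\<xi> + real m *\<^sub>R v))"
proof -
  obtain p where p: "degree p \<le> k" "\<And>s. f (\<xi> + s *\<^sub>R v) = poly p s"
    using hom_poly_line[OF assms] by blast
  show ?thesis unfolding p(2) by (subst interp[OF p(1)]) (simp add: mult.commute)
qed

lemma hom_ldiff: "hom_poly k f \<Longrightarrow> ldiff l f \<xi>"
proof -
  assume "hom_poly k f"
  then obtain p where p: "\<And>s. f (\<xi> + s *\<^sub>R axis l 1) = poly p s"
    using hom_poly_line[of k f \<xi> "axis l 1"] by blast
  have "(\<lambda>s. f (\<xi> + s *\<^sub>R axis l 1)) = poly p" using p by (rule ext)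
  then show ?thesis unfolding ldiff_def by simp
qed

lemma hom_pd: "hom_poly k f \<Longrightarrow> pd l f \<xi> = (\<Sum>m\<le>k. cL k m * f (\<xi> + real m *\<^sub>R axis l 1))"
proof -
  assume h: "hom_poly k f"
  have "pd l f \<xi> = deriv (\<lambda>s. \<Sum>m\<le>k. poly (lagp k m) s * f (\<xi> + real m *\<^sub>R axis l 1)) 0"
    unfolding pd_def by (subst hom_line_interp[OF h]) (rule refl)
  also have "\<dots> = (\<Sum>m\<le>k. cL k m * f (\<xi> + real m *\<^sub>R axis l 1))"
    by (rule deriv_poly_sum)
  finally show ?thesis .
qed

lemma fib_smooth:
  assumes H: "\<And>y. hom_poly k (S y)" and Sm: "\<And>\<eta>. smooth_fun (\<lambda>y. S y \<eta>)"
  shows "smooth_fun (\<lambda>y. pd l (S y) \<xi>)"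
  unfolding hom_pd[OF H] by (intro smooth_sum smooth_cmult Sm)

lemma fib_pd:
  assumes H: "\<And>y. hom_poly k (S y)" and Sm: "\<And>\<eta>. smooth_fun (\<lambda>y. S y \<eta>)"
  shows "pd j (\<lambda>y. pd l (S y) \<xi>) x = (\<Sum>m\<le>k. cL k m * pd j (\<lambda>y. S y (\<xi> + real m *\<^sub>R axis l 1)) x)"
  unfolding hom_pd[OF H]
  by (subst pd_sum) (auto intro!: ldiff_mult smooth_ldiff Sm sum.cong simp: pd_cmult[OF smooth_ldiff[OF Sm]])

lemma mixed_line:
  assumes H: "\<And>y. hom_poly k (S y)" and Sm: "\<And>\<eta>. smooth_fun (\<lambda>y. S y \<eta>)"
  shows "pd j (\<lambda>y. S y (\<xi> + s *\<^sub>R axis l 1)) x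
     = (\<Sum>m\<le>k. poly (lagp k m) s * pd j (\<lambda>y. S y (\<xi> + real m *\<^sub>R axis l 1)) x)"
  by (subst hom_line_interp[OF H]) (subst pd_sum, auto intro!: ldiff_mult smooth_ldiff Sm sum.cong simp: pd_cmult[OF smooth_ldiff[OF Sm]])

lemma mixed_line_fun:
  assumes H: "\<And>y. hom_poly k (S y)" and Sm: "\<And>\<eta>. smooth_fun (\<lambda>y. S y \<eta>)"
  shows "(\<lambda>s. pd j (\<lambda>y. S y (\<xi> + s *\<^sub>R axis l 1)) x)
     = (\<lambda>s. \<Sum>m\<le>k. poly (lagp k m) s * pd j (\<lambda>y. S y (\<xi> + real m *\<^sub>R axis l 1)) x)"
  by (rule ext) (rule mixed_line[OF H Sm])

lemma mixed_ldiff: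
  assumes H: "\<And>y. hom_poly k (S y)" and Sm: "\<And>\<eta>. smooth_fun (\<lambda>y. S y \<eta>)"
  shows "ldiff l (\<lambda>\<eta>. pd j (\<lambda>y. S y \<eta>) x) \<xi>"
  unfolding ldiff_def
  by (subst mixed_line_fun[OF H Sm]) (intro field_differentiable_sum poly_fd')

lemma mixed:
  assumes H: "\<And>y. hom_poly k (S y)" and Sm: "\<And>\<eta>. smooth_fun (\<lambda>y. S y \<eta>)"
  shows "pd l (\<lambda>\<eta>. pd j (\<lambda>y. S y \<eta>) x) \<xi> = pd j (\<lambda>y. pd l (S y) \<xi>) x"
proof -
  have "pd l (\<lambda>\<eta>. pd j (\<lambda>y. S y \<eta>) x) \<xi>
      = deriv (\<lambda>s. pd j (\<lambda>y. S y (\<xi> + s *\<^sub>R axis l 1)) x) 0"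
    by (rule pd_def)
  also have "\<dots> = deriv (\<lambda>s. \<Sum>m\<le>k. poly (lagp k m) s * pd j (\<lambda>y. S y (\<xi> + real m *\<^sub>R axis l 1)) x) 0"
    by (subst mixed_line_fun[OF H Sm]) (rule refl)
  also have "\<dots> = (\<Sum>m\<le>k. cL k m * pd j (\<lambda>y. S y (\<xi> + real m *\<^sub>R axis l 1)) x)"
    by (rule deriv_poly_sum)
  finally show ?thesis using fib_pd[OF H Sm] by simp
qed

section \<open>Euler identity\<close>

lemma pd_coord_fib: "pd l (\<lambda>\<eta>. \<eta> $ j) \<xi> = (if j = l then 1 else 0)"
  by simp

lemma euler: "hom_poly k f \<Longrightarrow> (\<Sum>l\<in>UNIV. \<xi> $ l * pd l f \<xi>) = real k * f \<xi>"
proof (induction k arbitrary: f)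
  case 0
  then obtain c where "f = (\<lambda>\<xi>. c)" by auto
  then show ?case by simp
next
  case (Suc k)
  then obtain g where g: "\<And>j. hom_poly k (g j)" "f = (\<lambda>\<xi>. \<Sum>j\<in>UNIV. \<xi> $ j * g j \<xi>)" by auto
  have pdf: "pd l f \<xi> = g l \<xi> + (\<Sum>j\<in>UNIV. \<xi> $ j * pd l (g j) \<xi>)" for l
  proof -
    have "pd l f \<xi> = (\<Sum>j\<in>UNIV. pd l (\<lambda>\<eta>. \<eta> $ j * g j \<eta>) \<xi>)"
      unfolding g(2) by (rule pd_sum) (auto intro!: ldiff_mult hom_ldiff[OF g(1)])
    also have "\<dots> = (\<Sum>j\<in>UNIV. (if j = l then g j \<xi> else 0) + \<xi> $ j * pd l (g j) \<xi>)"
      by (rule sum.cong) (auto simp: pd_mult hom_ldiff[OF g(1)])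
    finally show ?thesis by (simp add: sum.distrib)
  qed
  have s1: "(\<Sum>l\<in>UNIV. \<xi> $ l * pd l f \<xi>)
      = (\<Sum>l\<in>UNIV. \<xi> $ l * g l \<xi>) + (\<Sum>l\<in>UNIV. \<Sum>j\<in>UNIV. \<xi> $ l * (\<xi> $ j * pd l (g j) \<xi>))"
    unfolding pdf by (simp only: distrib_left sum.distrib sum_distrib_left)
  have s2: "(\<Sum>l\<in>UNIV. \<Sum>j\<in>UNIV. \<xi> $ l * (\<xi> $ j * pd l (g j) \<xi>))
      = (\<Sum>j\<in>UNIV. \<Sum>l\<in>UNIV. \<xi> $ l * (\<xi> $ j * pd l (g j) \<xi>))"
    by (rule sum.swap)
  have s3: "(\<Sum>j\<in>UNIV. \<Sum>l\<in>UNIV. \<xi> $ l * (\<xi> $ j * pd l (g j) \<xi>)) = (\<Sum>j\<in>UNIV. \<xi> $ j * (\<Sum>l\<in>UNIV. \<xi> $ l * pd l (g j) \<xi>))"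
    by (simp only: sum_distrib_left mult.left_commute)
  have s4: "(\<Sum>j\<in>UNIV. \<xi> $ j * (\<Sum>l\<in>UNIV. \<xi> $ l * pd l (g j) \<xi>)) = (\<Sum>j\<in>UNIV. \<xi> $ j * (real k * g j \<xi>))"
    by (simp only: Suc.IH[OF g(1)])
  have s5: "(\<Sum>l\<in>UNIV. \<xi> $ l * g l \<xi>) + (\<Sum>j\<in>UNIV. \<xi> $ j * (real k * g j \<xi>)) = real (Suc k) * f \<xi>"
    unfolding g(2) by (simp add: algebra_simps sum.distrib sum_distrib_left)
  show ?case by (simp only: s1 s2 s3 s4 s5)
qed

lemma hom_poly_zero: "hom_poly k (\<lambda>\<xi>. 0)"
proof (induction k)
  case (Suc k)
  then show ?case by (auto intro!: exI[of _ "\<lambda>j \<xi>. 0"])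
next
  case 0 show ?case by (simp only: hom_poly.simps, rule exI[of _ 0], rule refl)
qed

lemma sum_delta_mult: "(\<Sum>j\<in>UNIV. (\<xi>::real^'a::finite) $ j * (if j = a then c else 0)) = \<xi> $ a * c"
  by (subst sum.remove[of UNIV a]) auto

lemma hom_poly_pow: fixes a :: "'a::finite" shows "hom_poly k (\<lambda>\<xi>::real^'a. (\<xi> $ a) ^ k)"
proof (induction k)
  case (Suc k)
  have "(\<lambda>\<xi>::real^'a. (\<xi> $ a) ^ Suc k) = (\<lambda>\<xi>. \<Sum>j\<in>UNIV. \<xi> $ j * (if j = a then (\<xi> $ a) ^ k else 0))"
    by (rule ext) (simp only: sum_delta_mult power_Suc)
  moreover have "\<forall>j. hom_poly k (\<lambda>\<xi>::real^'a. if j = a then (\<xi> $ a) ^ k else 0)"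
  proof
    fix j show "hom_poly k (\<lambda>\<xi>::real^'a. if j = a then (\<xi> $ a) ^ k else 0)"
      by (cases "j = a") (simp_all add: Suc.IH hom_poly_zero)
  qed
  ultimately show ?case by (auto intro!: exI[of _ "\<lambda>j \<xi>. if j = a then (\<xi> $ a) ^ k else 0"])
next
  case 0 show ?case by (simp only: hom_poly.simps power_0, rule exI[of _ 1], rule refl)
qed


definition icase :: "('n \<Rightarrow> 'a) \<Rightarrow> ('n \<Rightarrow> 'a) \<Rightarrow> 'a \<Rightarrow> 'n idx \<Rightarrow> 'a" where
  "icase f g c j = (case j of Inl i \<Rightarrow> f i | Inr (Inl i) \<Rightarrow> g i | Inr (Inr _) \<Rightarrow> c)"

lemma icase_simps [simp]: "icase f g c (qc i) = f i" "icase f g c (pc i) = g i" "icase f g c tc = c"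
  by (simp_all add: icase_def qc_def pc_def tc_def)

definition b0 :: "'n::finite idx \<Rightarrow> 'n idx \<Rightarrow> real" where
  "b0 j l = icase (\<lambda>i. icase (\<lambda>_. 0) (\<lambda>i'. if i = i' then -1 else 0) 0 l)
                  (\<lambda>i. icase (\<lambda>i'. if i = i' then 1 else 0) (\<lambda>_. 0) 0 l) 0 j"

definition b1 :: "'n::finite idx \<Rightarrow> 'n idx \<Rightarrow> 'n idx \<Rightarrow> real" where
  "b1 j l r = icase (\<lambda>i. icase (\<lambda>_. 0) (\<lambda>_. 0) (if r = qc i then 1 else 0) l)
                   (\<lambda>i. icase (\<lambda>_. 0) (\<lambda>_. 0) (if r = pc i then 1 else 0) l)
                   (icase (\<lambda>i'. if r = qc i' then -1 else 0) (\<lambda>i'. if r = pc i' then -1 else 0) 0 l) j"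

lemma b0_simps [simp]:
  "b0 (qc i) (qc i') = 0" "b0 (qc i) (pc i') = (if i = i' then -1 else 0)" "b0 (qc i) tc = 0"
  "b0 (pc i) (qc i') = (if i = i' then 1 else 0)" "b0 (pc i) (pc i') = 0" "b0 (pc i) tc = 0"
  "b0 tc l = 0"
  by (simp_all add: b0_def)

lemma b1_simps [simp]:
  "b1 (qc i) (qc i') r = 0" "b1 (qc i) (pc i') r = 0" "b1 (qc i) tc r = (if r = qc i then 1 else 0)"
  "b1 (pc i) (qc i') r = 0" "b1 (pc i) (pc i') r = 0" "b1 (pc i) tc r = (if r = pc i then 1 else 0)"
  "b1 tc (qc i') r = (if r = qc i' then -1 else 0)" "b1 tc (pc i') r = (if r = pc i' then -1 else 0)"
  "b1 tc tc r = 0"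
  by (simp_all add: b1_def)

definition Bm :: "'n::finite idx \<Rightarrow> 'n idx \<Rightarrow> real^('n idx) \<Rightarrow> real" where
  "Bm j l x = b0 j l + (\<Sum>r\<in>UNIV. b1 j l r * x $ r)"

definition Yv :: "real^('n::finite idx) \<Rightarrow> real^('n idx) \<Rightarrow> 'n idx \<Rightarrow> real" where
  "Yv x \<xi> j = (\<Sum>l\<in>UNIV. Bm j l x * \<xi> $ l)"

lemma sum_if_eq [simp]: "(\<Sum>r\<in>UNIV. (if r = a then c else 0) * f r) = (c::real) * f (a::'a::finite)"
  by (subst sum.remove[of UNIV a]) auto

lemma sum_if_eq' [simp]: "(\<Sum>r\<in>UNIV. (if a = r then c else 0) * f r) = (c::real) * f (a::'a::finite)"
  by (subst sum.remove[of UNIV a]) auto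

lemma mult_if_0 [simp]:
  "x * (if P then c else 0) = (if P then x * c else (0::real))"
  "(if P then c else 0) * x = (if P then c * x else (0::real))"
  by auto

lemma sum_if_eq2 [simp]: "(\<Sum>r\<in>UNIV. f r * (if r = a then c else 0)) = f (a::'a::finite) * (c::real)"
  by (subst sum.remove[of UNIV a]) auto

lemma sum_if_eq3 [simp]: "(\<Sum>r\<in>UNIV. f r * (if a = r then c else 0)) = f (a::'a::finite) * (c::real)"
  by (subst sum.remove[of UNIV a]) auto

lemma Bm_simps [simp]:
  "Bm (qc i) (qc i') x = 0" "Bm (qc i) (pc i') x = (if i = i' then -1 else 0)" "Bm (qc i) tc x = x $ qc i"
  "Bm (pc i) (qc i') x = (if i = i' then 1 else 0)" "Bm (pc i) (pc i') x = 0" "Bm (pc i) tc x = x $ pc i"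
  "Bm tc (qc i') x = - x $ qc i'" "Bm tc (pc i') x = - x $ pc i'" "Bm tc tc x = 0"
  by (simp_all add: Bm_def)

lemma b0_antisym: "b0 j l = - b0 l j"
  by (cases j rule: idx_cases; cases l rule: idx_cases) auto

lemma b1_antisym: "b1 j l r = - b1 l j r"
  by (cases j rule: idx_cases; cases l rule: idx_cases) auto

lemma Bm_antisym: "Bm j l x = - Bm l j x"
  unfolding Bm_def by (subst b0_antisym, subst b1_antisym) (simp add: sum_negf)

lemma b1_tc: "b1 j l tc = 0"
  by (cases j rule: idx_cases; cases l rule: idx_cases) auto

lemma smooth_Bm [intro, simp]: "smooth_fun (Bm j l)"
proof -
  have "smooth_fun (\<lambda>x. b0 j l + (\<Sum>r\<in>UNIV. b1 j l r * x $ r))" by (intro smooth_add smooth_const smooth_sum smooth_cmult smooth_coord)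
  then show ?thesis unfolding Bm_def[abs_def] .
qed

lemma pd_Bm [simp]: "pd m (Bm j l) x = b1 j l m"
proof -
  have "pd m (Bm j l) x = pd m (\<lambda>x. b0 j l + (\<Sum>r\<in>UNIV. b1 j l r * x $ r)) x" unfolding Bm_def[abs_def] by simp
  also have "\<dots> = pd m (\<lambda>x. (\<Sum>r\<in>UNIV. b1 j l r * x $ r)) x"
    by (subst pd_add) (auto intro!: ldiff_sum ldiff_mult)
  also have "\<dots> = (\<Sum>r\<in>UNIV. pd m (\<lambda>x. b1 j l r * x $ r) x)"
    by (rule pd_sum) (auto intro!: ldiff_mult)
  also have "\<dots> = (\<Sum>r\<in>UNIV. b1 j l r * (if r = m then 1 else 0))"
    by (rule sum.cong) (auto simp: pd_mult)
  also have "\<dots> = b1 j l m" by (subst sum.remove[of UNIV m]) auto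
  finally show ?thesis .
qed

lemma Yv_simps [simp]:
  "Yv x \<xi> (qc i) = - \<xi> $ pc i + x $ qc i * \<xi> $ tc"
  "Yv x \<xi> (pc i) = \<xi> $ qc i + x $ pc i * \<xi> $ tc"
  "Yv x \<xi> tc = - (\<Sum>i\<in>UNIV. x $ qc i * \<xi> $ qc i + x $ pc i * \<xi> $ pc i)"
  by (simp_all add: Yv_def sum_idx sum.distrib sum_negf algebra_simps)

lemma Dop_Y: "Dop S x \<xi> = (\<Sum>j\<in>UNIV. Yv x \<xi> j * pd j (\<lambda>y. S y \<xi>) x)"
  unfolding Dop_def
  by (simp add: sum_idx algebra_simps sum.distrib sum_distrib_left sum_distrib_right sum_subtractf)

lemma axis_nth: "axis j (1::real) $ r = (if r = j then 1 else 0)"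
  by (simp add: axis_def)

lemma card_pos: "real CARD('n::finite) + 1 \<noteq> 0"
  by (simp add: add_nonneg_eq_0_iff)

lemma cvf_B: fixes g :: "real^('n::finite idx) \<Rightarrow> real" shows "cvf g x $ j = - (\<Sum>m\<in>UNIV. Bm j m x * pd m g x) - 2 * (if j = tc then g x else 0)"
proof -
  have Y: "Yv x (axis j 1) m = - Bm j m x" for m
    unfolding Yv_def axis_nth by (simp add: Bm_antisym[of m j])
  have a: "2 * (real CARD('n) + 1) * (- 1 / (real CARD('n) + 1)) - real 0 = (-2::real)"
    using card_pos[where 'n='n] by (simp add: field_simps)
  have "cvf g x $ j = Dop (\<lambda>y \<xi>. g y) x (axis j 1) + (-2) * axis j 1 $ tc * g x"
    unfolding cvf_def Xop_def using a by simp
  also have "Dop (\<lambda>y \<xi>. g y) x (axis j 1) = - (\<Sum>m\<in>UNIV. Bm j m x * pd m g x)"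
    unfolding Dop_Y Y by (simp add: sum_negf)
  finally show ?thesis by (simp add: axis_nth)
qed

lemma cvf_comp:
  "cvf g x $ qc i = pd (pc i) g x - x $ qc i * pd tc g x"
  "cvf g x $ pc i = - pd (qc i) g x - x $ pc i * pd tc g x"
  "cvf g x $ tc = (\<Sum>i\<in>UNIV. x $ qc i * pd (qc i) g x + x $ pc i * pd (pc i) g x) - 2 * g x"
  unfolding cvf_B by (simp_all add: sum_idx sum.distrib sum_negf algebra_simps)

lemma B7: "(\<Sum>m\<in>UNIV. \<Sum>s\<in>UNIV. u m * b1 j s m * h s)
    = h tc * u j - (if j = tc then (\<Sum>r\<in>UNIV. u r * h r) else 0)"
  by (cases j rule: idx_cases) (simp_all add: sum_idx sum.distrib algebra_simps sum_negf)

lemma B5: "(\<Sum>r\<in>UNIV. \<Sum>s\<in>UNIV. b1 r s l * \<xi> s * h r) = \<xi> tc * h l - \<xi> l * h tc"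
  by (cases l rule: idx_cases) (simp_all add: sum_idx sum.distrib algebra_simps sum_negf)

lemma Bdiv: "(\<Sum>j\<in>UNIV. b1 j (m::'n::finite idx) j) = (if m = tc then 2 * real CARD('n) else 0)"
  by (cases m rule: idx_cases) (simp_all add: sum_idx)

lemma antisym_quad:
  fixes A :: "'a::finite \<Rightarrow> 'a \<Rightarrow> real"
  assumes "\<And>m l. A m l = - A l m"
  shows "(\<Sum>m\<in>UNIV. \<Sum>l\<in>UNIV. A m l * v l * v m) = 0"
proof -
  have "(\<Sum>m\<in>UNIV. \<Sum>l\<in>UNIV. A m l * v l * v m) = (\<Sum>l\<in>UNIV. \<Sum>m\<in>UNIV. A m l * v l * v m)"
    by (rule sum.swap)
  also have "\<dots> = (\<Sum>l\<in>UNIV. \<Sum>m\<in>UNIV. - (A l m * v m * v l))"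
  proof (intro sum.cong refl)
    fix l m show "A m l * v l * v m = - (A l m * v m * v l)"
      by (subst assms) (simp add: algebra_simps)
  qed
  also have "\<dots> = - (\<Sum>l\<in>UNIV. \<Sum>m\<in>UNIV. A l m * v m * v l)"
    by (simp add: sum_negf)
  finally show ?thesis by linarith
qed

lemma Yv_xi: "(\<Sum>m\<in>UNIV. Yv x \<xi> m * \<xi> $ m) = 0"
  unfolding Yv_def sum_distrib_right
  by (rule antisym_quad) (rule Bm_antisym)


lemma alg1:
  fixes Zv S1 E Y \<xi> ddv :: "'i::finite \<Rightarrow> real" and dZ S2 M dY BB :: "'i \<Rightarrow> 'i \<Rightarrow> real"
    and ddZ :: "'i \<Rightarrow> 'i \<Rightarrow> 'i \<Rightarrow> real" and t :: 'i
  assumes S2sym: "\<And>m j. S2 m j = S2 j m"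
  defines "dv \<equiv> (\<Sum>j\<in>UNIV. dZ j j)"
  shows "(\<Sum>m\<in>UNIV. Y m * ((\<Sum>j\<in>UNIV. dZ m j * S1 j + Zv j * S2 m j) + \<delta> * (ddv m * S0 + dv * S1 m)
            - (\<Sum>j\<in>UNIV. \<Sum>l\<in>UNIV. ddZ m l j * \<xi> j * E l + dZ l j * \<xi> j * M m l)))
        + a * \<xi> t * ((\<Sum>j\<in>UNIV. Zv j * S1 j) + \<delta> * dv * S0 - (\<Sum>j\<in>UNIV. \<Sum>l\<in>UNIV. dZ l j * \<xi> j * E l))
      - ((\<Sum>j\<in>UNIV. Zv j * ((\<Sum>m\<in>UNIV. dY j m * S1 m + Y m * S2 j m) + a * \<xi> t * S1 j))
        + \<delta>' * dv * ((\<Sum>m\<in>UNIV. Y m * S1 m) + a * \<xi> t * S0)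
        - (\<Sum>j\<in>UNIV. \<Sum>l\<in>UNIV. dZ l j * \<xi> j * ((\<Sum>m\<in>UNIV. BB m l * S1 m + Y m * M m l)
             + a * ((if l = t then S0 else 0) + \<xi> t * E l))))
    = (\<Sum>j\<in>UNIV. ((\<Sum>m\<in>UNIV. Y m * dZ m j - Zv m * dY m j) + (\<Sum>l\<in>UNIV. (\<Sum>m\<in>UNIV. dZ l m * \<xi> m) * BB j l)
          + (\<delta> - \<delta>') * dv * Y j) * S1 j)
      + (\<delta> * (\<Sum>m\<in>UNIV. Y m * ddv m) + a * (\<Sum>j\<in>UNIV. dZ t j * \<xi> j) + a * (\<delta> - \<delta>') * \<xi> t * dv) * S0
      - (\<Sum>l\<in>UNIV. (\<Sum>m\<in>UNIV. Y m * (\<Sum>j\<in>UNIV. ddZ m l j * \<xi> j)) * E l)"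
proof -
  define L1 where "L1 = (\<Sum>m\<in>UNIV. Y m * (\<Sum>j\<in>UNIV. dZ m j * S1 j))"
  define L2 where "L2 = (\<Sum>m\<in>UNIV. Y m * (\<Sum>j\<in>UNIV. Zv j * S2 m j))"
  define L3 where "L3 = (\<Sum>m\<in>UNIV. Y m * ddv m)"
  define L4 where "L4 = (\<Sum>m\<in>UNIV. Y m * S1 m)"
  define L5 where "L5 = (\<Sum>m\<in>UNIV. Y m * (\<Sum>j\<in>UNIV. \<Sum>l\<in>UNIV. ddZ m l j * \<xi> j * E l))"
  define L6 where "L6 = (\<Sum>m\<in>UNIV. Y m * (\<Sum>j\<in>UNIV. \<Sum>l\<in>UNIV. dZ l j * \<xi> j * M m l))"
  define L7 where "L7 = (\<Sum>j\<in>UNIV. Zv j * S1 j)"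
  define L8 where "L8 = (\<Sum>j\<in>UNIV. \<Sum>l\<in>UNIV. dZ l j * \<xi> j * E l)"
  define R1 where "R1 = (\<Sum>j\<in>UNIV. Zv j * (\<Sum>m\<in>UNIV. dY j m * S1 m))"
  define R2 where "R2 = (\<Sum>j\<in>UNIV. Zv j * (\<Sum>m\<in>UNIV. Y m * S2 j m))"
  define R5 where "R5 = (\<Sum>j\<in>UNIV. \<Sum>l\<in>UNIV. dZ l j * \<xi> j * (\<Sum>m\<in>UNIV. BB m l * S1 m))"
  define R6 where "R6 = (\<Sum>j\<in>UNIV. \<Sum>l\<in>UNIV. dZ l j * \<xi> j * (\<Sum>m\<in>UNIV. Y m * M m l))"
  define R7 where "R7 = (\<Sum>j\<in>UNIV. \<Sum>l\<in>UNIV. dZ l j * \<xi> j * (if l = t then S0 else 0))"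
  have lhs1: "(\<Sum>m\<in>UNIV. Y m * ((\<Sum>j\<in>UNIV. dZ m j * S1 j + Zv j * S2 m j) + \<delta> * (ddv m * S0 + dv * S1 m)
            - (\<Sum>j\<in>UNIV. \<Sum>l\<in>UNIV. ddZ m l j * \<xi> j * E l + dZ l j * \<xi> j * M m l)))
      = L1 + L2 + \<delta> * S0 * L3 + \<delta> * dv * L4 - L5 - L6"
    unfolding L1_def L2_def L3_def L4_def L5_def L6_def
    by (simp add: sum.distrib sum_subtractf distrib_left right_diff_distrib sum_distrib_left algebra_simps)
  have lhs2: "(\<Sum>j\<in>UNIV. \<Sum>l\<in>UNIV. dZ l j * \<xi> j * E l) = L8" unfolding L8_def ..
  have rhs1: "(\<Sum>j\<in>UNIV. Zv j * ((\<Sum>m\<in>UNIV. dY j m * S1 m + Y m * S2 j m) + a * \<xi> t * S1 j))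
      = R1 + R2 + a * \<xi> t * L7"
    unfolding R1_def R2_def L7_def
    by (simp add: sum.distrib distrib_left sum_distrib_left algebra_simps)
  have rhs2: "(\<Sum>j\<in>UNIV. \<Sum>l\<in>UNIV. dZ l j * \<xi> j * ((\<Sum>m\<in>UNIV. BB m l * S1 m + Y m * M m l)
             + a * ((if l = t then S0 else 0) + \<xi> t * E l))) = R5 + R6 + a * R7 + a * \<xi> t * L8"
    unfolding R5_def R6_def R7_def L8_def
    by (simp only: sum.distrib distrib_left sum_distrib_left mult.assoc mult.left_commute)
  have e2: "L2 = R2"
  proof -
    have "L2 = (\<Sum>m\<in>UNIV. \<Sum>j\<in>UNIV. Y m * Zv j * S2 j m)"
      unfolding L2_def by (simp add: sum_distrib_left S2sym mult.assoc)
    also have "\<dots> = (\<Sum>j\<in>UNIV. \<Sum>m\<in>UNIV. Y m * Zv j * S2 j m)" by (rule sum.swap)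
    also have "\<dots> = R2" unfolding R2_def by (simp add: sum_distrib_left algebra_simps)
    finally show ?thesis .
  qed
  have e6: "L6 = R6"
  proof -
    have "L6 = (\<Sum>m\<in>UNIV. \<Sum>j\<in>UNIV. \<Sum>l\<in>UNIV. Y m * (dZ l j * \<xi> j * M m l))"
      unfolding L6_def by (simp add: sum_distrib_left)
    also have "\<dots> = (\<Sum>j\<in>UNIV. \<Sum>m\<in>UNIV. \<Sum>l\<in>UNIV. Y m * (dZ l j * \<xi> j * M m l))" by (rule sum.swap)
    also have "\<dots> = (\<Sum>j\<in>UNIV. \<Sum>l\<in>UNIV. \<Sum>m\<in>UNIV. Y m * (dZ l j * \<xi> j * M m l))"
      by (rule sum.cong[OF refl], rule sum.swap)
    also have "\<dots> = R6" unfolding R6_def by (simp add: sum_distrib_left algebra_simps)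
    finally show ?thesis .
  qed
  have e7: "R7 = (\<Sum>j\<in>UNIV. dZ t j * \<xi> j) * S0"
    unfolding R7_def by (simp add: sum_distrib_right)
  have e5: "L5 = (\<Sum>l\<in>UNIV. (\<Sum>m\<in>UNIV. Y m * (\<Sum>j\<in>UNIV. ddZ m l j * \<xi> j)) * E l)"
  proof -
    have "L5 = (\<Sum>m\<in>UNIV. \<Sum>j\<in>UNIV. \<Sum>l\<in>UNIV. Y m * (ddZ m l j * \<xi> j) * E l)"
      unfolding L5_def by (simp add: sum_distrib_left mult.assoc)
    also have "\<dots> = (\<Sum>m\<in>UNIV. \<Sum>l\<in>UNIV. \<Sum>j\<in>UNIV. Y m * (ddZ m l j * \<xi> j) * E l)"
      by (rule sum.cong[OF refl], rule sum.swap)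
    also have "\<dots> = (\<Sum>l\<in>UNIV. \<Sum>m\<in>UNIV. \<Sum>j\<in>UNIV. Y m * (ddZ m l j * \<xi> j) * E l)" by (rule sum.swap)
    also have "\<dots> = (\<Sum>l\<in>UNIV. (\<Sum>m\<in>UNIV. Y m * (\<Sum>j\<in>UNIV. ddZ m l j * \<xi> j)) * E l)"
      by (simp add: sum_distrib_left sum_distrib_right)
    finally show ?thesis .
  qed
  have e1: "L1 - R1 + R5 + (\<delta> - \<delta>') * dv * L4 = (\<Sum>j\<in>UNIV. ((\<Sum>m\<in>UNIV. Y m * dZ m j - Zv m * dY m j)
      + (\<Sum>l\<in>UNIV. (\<Sum>m\<in>UNIV. dZ l m * \<xi> m) * BB j l) + (\<delta> - \<delta>') * dv * Y j) * S1 j)"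
  proof -
    have a1: "L1 = (\<Sum>j\<in>UNIV. (\<Sum>m\<in>UNIV. Y m * dZ m j) * S1 j)"
      unfolding L1_def sum_distrib_left sum_distrib_right by (subst sum.swap) (simp add: mult.assoc)
    have a2: "R1 = (\<Sum>j\<in>UNIV. (\<Sum>m\<in>UNIV. Zv m * dY m j) * S1 j)"
      unfolding R1_def sum_distrib_left sum_distrib_right by (subst sum.swap) (simp add: mult.assoc)
    have a3: "R5 = (\<Sum>j\<in>UNIV. (\<Sum>l\<in>UNIV. (\<Sum>m\<in>UNIV. dZ l m * \<xi> m) * BB j l) * S1 j)"
    proof -
      have "R5 = (\<Sum>m\<in>UNIV. \<Sum>l\<in>UNIV. \<Sum>mm\<in>UNIV. dZ l m * \<xi> m * (BB mm l * S1 mm))"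
        unfolding R5_def by (simp add: sum_distrib_left)
      also have "\<dots> = (\<Sum>m\<in>UNIV. \<Sum>mm\<in>UNIV. \<Sum>l\<in>UNIV. dZ l m * \<xi> m * (BB mm l * S1 mm))"
        by (rule sum.cong[OF refl], rule sum.swap)
      also have "\<dots> = (\<Sum>mm\<in>UNIV. \<Sum>m\<in>UNIV. \<Sum>l\<in>UNIV. dZ l m * \<xi> m * (BB mm l * S1 mm))"
        by (rule sum.swap)
      also have "\<dots> = (\<Sum>mm\<in>UNIV. \<Sum>l\<in>UNIV. \<Sum>m\<in>UNIV. dZ l m * \<xi> m * (BB mm l * S1 mm))"
        by (rule sum.cong[OF refl], rule sum.swap)
      also have "\<dots> = (\<Sum>j\<in>UNIV. (\<Sum>l\<in>UNIV. (\<Sum>m\<in>UNIV. dZ l m * \<xi> m) * BB j l) * S1 j)"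
        by (simp add: sum_distrib_right mult.assoc)
      finally show ?thesis .
    qed
    have a4: "(\<delta> - \<delta>') * dv * L4 = (\<Sum>j\<in>UNIV. ((\<delta> - \<delta>') * dv * Y j) * S1 j)"
      unfolding L4_def by (simp add: sum_distrib_left mult.assoc)
    show ?thesis unfolding a1 a2 a3 a4
      by (simp add: sum.distrib sum_subtractf algebra_simps)
  qed
  show ?thesis
    unfolding lhs1 lhs2 rhs1 rhs2 e2 e6 e7 L3_def[symmetric] L4_def[symmetric] L7_def[symmetric] e5[symmetric] e1[symmetric]
    by (simp add: algebra_simps)
qed


lemma pd_add_sm: "smooth_fun F \<Longrightarrow> smooth_fun G \<Longrightarrow> pd m (\<lambda>y. F y + G y) x = pd m F x + pd m G x"
  by (intro pd_add smooth_ldiff)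
lemma pd_diff_sm: "smooth_fun F \<Longrightarrow> smooth_fun G \<Longrightarrow> pd m (\<lambda>y. F y - G y) x = pd m F x - pd m G x"
  by (intro pd_diff smooth_ldiff)
lemma pd_mult_sm: "smooth_fun F \<Longrightarrow> smooth_fun G \<Longrightarrow> pd m (\<lambda>y. F y * G y) x = pd m F x * G x + F x * pd m G x"
  by (intro pd_mult smooth_ldiff)
lemma pd_sum_sm: "(\<And>i. smooth_fun (F i)) \<Longrightarrow> pd m (\<lambda>y. \<Sum>i\<in>A. F i y) x = (\<Sum>i\<in>A. pd m (F i) x)"
  by (intro pd_sum smooth_ldiff)

lemma smooth_Yv [simp]: "smooth_fun (\<lambda>y. Yv y \<xi> m)"
  unfolding Yv_def by (intro smooth_sum smooth_mult smooth_Bm smooth_const)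

lemma smooth_Bm' [simp]: "smooth_fun (\<lambda>y. Bm j l y)"
  using smooth_Bm[of j l] by (simp add: eta_contract_eq)

lemma stage1_lhs:
  fixes Z :: "real^('n::finite idx) \<Rightarrow> real^('n idx)"
  assumes Zs: "\<And>j. smooth_fun (\<lambda>y. Z y $ j)" and H: "\<And>y. hom_poly k (S y)"
    and Sm: "\<And>\<eta>. smooth_fun (\<lambda>y. S y \<eta>)"
  shows "pd m (\<lambda>y. Lder \<delta> Z S y \<xi>) x =
    (\<Sum>j\<in>UNIV. pd m (\<lambda>y. Z y $ j) x * pd j (\<lambda>y. S y \<xi>) x + Z x $ j * pd m (pd j (\<lambda>y. S y \<xi>)) x)
    + \<delta> * (pd m (\<lambda>y. \<Sum>j\<in>UNIV. pd j (\<lambda>y. Z y $ j) y) x * S x \<xi> + (\<Sum>j\<in>UNIV. pd j (\<lambda>y. Z y $ j) x) * pd m (\<lambda>y. S y \<xi>) x)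
    - (\<Sum>j\<in>UNIV. \<Sum>l\<in>UNIV. pd m (pd l (\<lambda>y. Z y $ j)) x * \<xi> $ j * pd l (S x) \<xi>
        + pd l (\<lambda>y. Z y $ j) x * \<xi> $ j * pd m (\<lambda>y. pd l (S y) \<xi>) x)"
proof -
  have fs: "smooth_fun (\<lambda>y. pd l (S y) \<xi>)" for l using fib_smooth[OF H Sm] .
  have e: "(\<lambda>y. Lder \<delta> Z S y \<xi>) = (\<lambda>y. (\<Sum>j\<in>UNIV. Z y $ j * pd j (\<lambda>y. S y \<xi>) y)
     + \<delta> * (\<Sum>j\<in>UNIV. pd j (\<lambda>y. Z y $ j) y) * S y \<xi>
     - (\<Sum>j\<in>UNIV. \<Sum>l\<in>UNIV. pd l (\<lambda>y. Z y $ j) y * \<xi> $ j * pd l (S y) \<xi>))"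
    by (simp add: Lder_def[abs_def])
  show ?thesis unfolding e
    by (simp add: pd_add_sm pd_diff_sm pd_mult_sm pd_sum_sm smooth_add smooth_mult smooth_diff' smooth_sum
        smooth_pd Zs Sm fs sum.distrib algebra_simps)
qed

lemma Xop_Y: "Xop k \<delta> S y \<eta> = (\<Sum>m\<in>UNIV. Yv y \<eta> m * pd m (\<lambda>y. S y \<eta>) y)
    + (2 * (real CARD('n) + 1) * \<delta> - real k) * \<eta> $ tc * S y \<eta>"
  for S :: "real^('n::finite idx) \<Rightarrow> real^('n idx) \<Rightarrow> real"
  unfolding Xop_def Dop_Y by simp

lemma stage1_rhs_x:
  fixes S :: "real^('n::finite idx) \<Rightarrow> real^('n idx) \<Rightarrow> real"
  assumes Sm: "\<And>\<eta>. smooth_fun (\<lambda>y. S y \<eta>)"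
  shows "pd j (\<lambda>y. Xop k \<delta> S y \<xi>) x =
    (\<Sum>m\<in>UNIV. pd j (\<lambda>y. Yv y \<xi> m) x * pd m (\<lambda>y. S y \<xi>) x + Yv x \<xi> m * pd j (pd m (\<lambda>y. S y \<xi>)) x)
    + (2 * (real CARD('n) + 1) * \<delta> - real k) * \<xi> $ tc * pd j (\<lambda>y. S y \<xi>) x"
  unfolding Xop_Y
  by (simp add: pd_add_sm pd_diff_sm pd_mult_sm pd_sum_sm smooth_add smooth_mult smooth_diff' smooth_sum
        smooth_pd Sm)

lemma ldiff_Yv [simp]: "ldiff l (\<lambda>\<eta>. Yv x \<eta> m) \<xi>"
  unfolding Yv_def by (intro ldiff_sum ldiff_mult ldiff_const ldiff_coord)

lemma pd_Yv_fib [simp]: "pd l (\<lambda>\<eta>. Yv x \<eta> m) \<xi> = Bm m l x"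
  unfolding Yv_def by (subst pd_sum) (auto intro!: ldiff_mult simp: pd_mult)

lemma stage1_rhs_xi:
  fixes S :: "real^('n::finite idx) \<Rightarrow> real^('n idx) \<Rightarrow> real"
  assumes H: "\<And>y. hom_poly k (S y)" and Sm: "\<And>\<eta>. smooth_fun (\<lambda>y. S y \<eta>)"
  shows "pd l (Xop k \<delta> S x) \<xi> =
    (\<Sum>m\<in>UNIV. Bm m l x * pd m (\<lambda>y. S y \<xi>) x + Yv x \<xi> m * pd m (\<lambda>y. pd l (S y) \<xi>) x)
    + (2 * (real CARD('n) + 1) * \<delta> - real k) * ((if l = tc then S x \<xi> else 0) + \<xi> $ tc * pd l (S x) \<xi>)"
proof -
  have e: "Xop k \<delta> S x = (\<lambda>\<eta>. (\<Sum>m\<in>UNIV. Yv x \<eta> m * pd m (\<lambda>y. S y \<eta>) x)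
    + (2 * (real CARD('n) + 1) * \<delta> - real k) * \<eta> $ tc * S x \<eta>)"
    by (rule ext) (rule Xop_Y)
  have ml: "ldiff l (\<lambda>\<eta>. pd m (\<lambda>y. S y \<eta>) x) \<xi>" for m by (rule mixed_ldiff[OF H Sm])
  have hl: "ldiff l (S x) \<xi>" by (rule hom_ldiff[OF H])
  have mx: "pd l (\<lambda>\<eta>. pd m (\<lambda>y. S y \<eta>) x) \<xi> = pd m (\<lambda>y. pd l (S y) \<xi>) x" for m
    by (rule mixed[OF H Sm])
  show ?thesis unfolding e
    apply (simp add: pd_add pd_mult pd_sum ldiff_add ldiff_mult ldiff_sum ml hl mx)
    apply (simp add: algebra_simps)
    done
qed

theorem stage1:
  fixes Z :: "real^('n::finite idx) \<Rightarrow> real^('n idx)" and S :: "real^('n idx) \<Rightarrow> real^('n idx) \<Rightarrow> real"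
    and \<delta> \<delta>' :: real and x \<xi> :: "real^('n idx)" and k :: nat
  assumes Zs: "\<And>j. smooth_fun (\<lambda>y. Z y $ j)" and H: "\<And>y. hom_poly k (S y)"
    and Sm: "\<And>\<eta>. smooth_fun (\<lambda>y. S y \<eta>)"
  defines "a \<equiv> 2 * (real CARD('n) + 1) * \<delta> - real k"
  defines "dv \<equiv> (\<Sum>j\<in>UNIV. pd j (\<lambda>y. Z y $ j) x)"
  shows "Xop k \<delta> (Lder \<delta> Z S) x \<xi> - Lder \<delta>' Z (Xop k \<delta> S) x \<xi> =
      (\<Sum>j\<in>UNIV. ((\<Sum>m\<in>UNIV. Yv x \<xi> m * pd m (\<lambda>y. Z y $ j) x - Z x $ m * pd m (\<lambda>y. Yv y \<xi> j) x)
          + (\<Sum>l\<in>UNIV. (\<Sum>m\<in>UNIV. pd l (\<lambda>y. Z y $ m) x * \<xi> $ m) * Bm j l x)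
          + (\<delta> - \<delta>') * dv * Yv x \<xi> j) * pd j (\<lambda>y. S y \<xi>) x)
      + (\<delta> * (\<Sum>m\<in>UNIV. Yv x \<xi> m * pd m (\<lambda>y. \<Sum>j\<in>UNIV. pd j (\<lambda>y. Z y $ j) y) x)
         + a * (\<Sum>j\<in>UNIV. pd tc (\<lambda>y. Z y $ j) x * \<xi> $ j) + a * (\<delta> - \<delta>') * \<xi> $ tc * dv) * S x \<xi>
      - (\<Sum>l\<in>UNIV. (\<Sum>m\<in>UNIV. Yv x \<xi> m * (\<Sum>j\<in>UNIV. pd m (pd l (\<lambda>y. Z y $ j)) x * \<xi> $ j)) * pd l (S x) \<xi>)"
proof -
  have L: "Xop k \<delta> (Lder \<delta> Z S) x \<xi> =
    (\<Sum>m\<in>UNIV. Yv x \<xi> m * ((\<Sum>j\<in>UNIV. pd m (\<lambda>y. Z y $ j) x * pd j (\<lambda>y. S y \<xi>) x + Z x $ j * pd m (pd j (\<lambda>y. S y \<xi>)) x)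
    + \<delta> * (pd m (\<lambda>y. \<Sum>j\<in>UNIV. pd j (\<lambda>y. Z y $ j) y) x * S x \<xi> + dv * pd m (\<lambda>y. S y \<xi>) x)
    - (\<Sum>j\<in>UNIV. \<Sum>l\<in>UNIV. pd m (pd l (\<lambda>y. Z y $ j)) x * \<xi> $ j * pd l (S x) \<xi>
        + pd l (\<lambda>y. Z y $ j) x * \<xi> $ j * pd m (\<lambda>y. pd l (S y) \<xi>) x)))
    + a * \<xi> $ tc * ((\<Sum>j\<in>UNIV. Z x $ j * pd j (\<lambda>y. S y \<xi>) x) + \<delta> * dv * S x \<xi>
        - (\<Sum>j\<in>UNIV. \<Sum>l\<in>UNIV. pd l (\<lambda>y. Z y $ j) x * \<xi> $ j * pd l (S x) \<xi>))"
    unfolding Xop_Y a_def dv_def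
    by (simp only: stage1_lhs[OF Zs H Sm]) (simp only: Lder_def)
  have R: "Lder \<delta>' Z (Xop k \<delta> S) x \<xi> =
    (\<Sum>j\<in>UNIV. Z x $ j * ((\<Sum>m\<in>UNIV. pd j (\<lambda>y. Yv y \<xi> m) x * pd m (\<lambda>y. S y \<xi>) x + Yv x \<xi> m * pd j (pd m (\<lambda>y. S y \<xi>)) x)
       + a * \<xi> $ tc * pd j (\<lambda>y. S y \<xi>) x))
    + \<delta>' * dv * ((\<Sum>m\<in>UNIV. Yv x \<xi> m * pd m (\<lambda>y. S y \<xi>) x) + a * \<xi> $ tc * S x \<xi>)
    - (\<Sum>j\<in>UNIV. \<Sum>l\<in>UNIV. pd l (\<lambda>y. Z y $ j) x * \<xi> $ j *
        ((\<Sum>m\<in>UNIV. Bm m l x * pd m (\<lambda>y. S y \<xi>) x + Yv x \<xi> m * pd m (\<lambda>y. pd l (S y) \<xi>) x)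
         + a * ((if l = tc then S x \<xi> else 0) + \<xi> $ tc * pd l (S x) \<xi>)))"
    unfolding Lder_def[of \<delta>' Z] a_def dv_def
    by (simp only: stage1_rhs_x[OF Sm] stage1_rhs_xi[OF H Sm]) (simp only: Xop_Y)
  have S2: "pd m (pd j (\<lambda>y. S y \<xi>)) x = pd j (pd m (\<lambda>y. S y \<xi>)) x" for m j
    by (rule clairaut[OF Sm])
  show ?thesis unfolding L R dv_def
    by (rule alg1[OF S2])
qed


abbreviation (input) ind :: "'n::finite idx \<Rightarrow> real" where "ind j \<equiv> (if j = tc then 1 else 0)"

lemma cvf_fun: "(\<lambda>y. cvf g y $ j) = (\<lambda>y. - (\<Sum>m\<in>UNIV. Bm j m y * pd m g y) - 2 * ind j * g y)"
  by (rule ext) (simp add: cvf_B)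

lemma smooth_cvf:
  assumes g: "smooth_fun g"
  shows "smooth_fun (\<lambda>y. cvf g y $ j)"
  unfolding cvf_fun
  by (intro smooth_diff' smooth_minus smooth_sum smooth_mult smooth_const smooth_Bm' smooth_pd g)

lemma smooth_cvf_vf: "smooth_fun g \<Longrightarrow> smooth_vf (cvf g)"
  unfolding smooth_vf_def by (blast intro: smooth_cvf)

lemma dZ_fun:
  assumes g: "smooth_fun g"
  shows "(\<lambda>y. pd l (\<lambda>y. cvf g y $ j) y) =
    (\<lambda>y. - (\<Sum>m\<in>UNIV. b1 j m l * pd m g y + Bm j m y * pd l (pd m g) y) - 2 * ind j * pd l g y)"
proof (rule ext)
  fix y
  have sg: "smooth_fun (pd m g)" for m using g by (rule smooth_pd)
  show "pd l (\<lambda>y. cvf g y $ j) y =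
    - (\<Sum>m\<in>UNIV. b1 j m l * pd m g y + Bm j m y * pd l (pd m g) y) - 2 * ind j * pd l g y"
    unfolding cvf_fun
    by (simp add: pd_add_sm pd_diff_sm pd_mult_sm pd_sum_sm smooth_add smooth_mult smooth_diff' smooth_sum
        smooth_minus sg g sum_negf pd_minus smooth_ldiff)
qed

lemma dZ_cvf:
  assumes g: "smooth_fun g"
  shows "pd l (\<lambda>y. cvf g y $ j) y =
    - (\<Sum>m\<in>UNIV. b1 j m l * pd m g y + Bm j m y * pd l (pd m g) y) - 2 * ind j * pd l g y"
  using fun_cong[OF dZ_fun[OF g, of l j]] by simp

lemma ddZ_cvf:
  assumes g: "smooth_fun g"
  shows "pd m (pd l (\<lambda>y. cvf g y $ j)) x =
    - (\<Sum>r\<in>UNIV. b1 j r l * pd m (pd r g) x + (b1 j r m * pd l (pd r g) x + Bm j r x * pd m (pd l (pd r g)) x))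
    - 2 * ind j * pd m (pd l g) x"
proof -
  have sg: "smooth_fun (pd m g)" for m using g by (rule smooth_pd)
  have sg2: "smooth_fun (pd l (pd m g))" for l m using sg by (rule smooth_pd)
  have e: "pd l (\<lambda>y. cvf g y $ j) = (\<lambda>y. - (\<Sum>m\<in>UNIV. b1 j m l * pd m g y + Bm j m y * pd l (pd m g) y) - 2 * ind j * pd l g y)"
    using dZ_fun[OF g] by (simp add: eta_contract_eq)
  show ?thesis unfolding e
    by (simp add: pd_add_sm pd_diff_sm pd_mult_sm pd_sum_sm smooth_add smooth_mult smooth_diff' smooth_sum
        smooth_minus sg sg2 g sum_negf pd_minus smooth_ldiff sum.distrib algebra_simps)
qed

lemma sum_antisym_sym:
  fixes A M :: "'a::finite \<Rightarrow> 'a \<Rightarrow> real"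
  assumes "\<And>m l. A m l = - A l m" "\<And>m l. M m l = M l m"
  shows "(\<Sum>m\<in>UNIV. \<Sum>l\<in>UNIV. A m l * M m l) = 0"
proof -
  have "(\<Sum>m\<in>UNIV. \<Sum>l\<in>UNIV. A m l * M m l) = (\<Sum>l\<in>UNIV. \<Sum>m\<in>UNIV. A m l * M m l)"
    by (rule sum.swap)
  also have "\<dots> = (\<Sum>l\<in>UNIV. \<Sum>m\<in>UNIV. - (A l m * M l m))"
  proof (intro sum.cong refl)
    fix l m show "A m l * M m l = - (A l m * M l m)"
      by (subst assms(1), subst assms(2)) simp
  qed
  also have "\<dots> = - (\<Sum>l\<in>UNIV. \<Sum>m\<in>UNIV. A l m * M l m)"
    by (simp add: sum_negf)
  finally show ?thesis by linarith
qed

lemma dv_cvf: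
  fixes g :: "real^('n::finite idx) \<Rightarrow> real"
  assumes g: "smooth_fun g"
  shows "(\<Sum>j\<in>UNIV. pd j (\<lambda>y. cvf g y $ j) y) = - 2 * (real CARD('n) + 1) * pd tc g y"
proof -
  have "(\<Sum>j\<in>UNIV. pd j (\<lambda>y. cvf g y $ j) y)
     = - (\<Sum>m\<in>UNIV. (\<Sum>j\<in>UNIV. b1 j m j) * pd m g y) - (\<Sum>j\<in>UNIV. \<Sum>m\<in>UNIV. Bm j m y * pd j (pd m g) y) - 2 * pd tc g y"
    unfolding dZ_cvf[OF g]
    by (simp add: sum.distrib sum_subtractf sum_negf sum_distrib_right sum.swap[of "\<lambda>j m. b1 j m j * pd m g y"])
  also have "(\<Sum>j\<in>UNIV. \<Sum>m\<in>UNIV. Bm j m y * pd j (pd m g) y) = 0"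
    by (rule sum_antisym_sym) (auto intro: Bm_antisym clairaut smooth_pd g)
  also have "(\<Sum>m\<in>UNIV. (\<Sum>j\<in>UNIV. b1 j m j) * pd m g y) = 2 * real CARD('n) * pd tc g y"
    unfolding Bdiv by simp
  finally show ?thesis by (simp add: algebra_simps)
qed

lemma ddv_cvf:
  fixes g :: "real^('n::finite idx) \<Rightarrow> real"
  assumes g: "smooth_fun g"
  shows "pd m (\<lambda>y. \<Sum>j\<in>UNIV. pd j (\<lambda>y. cvf g y $ j) y) x = - 2 * (real CARD('n) + 1) * pd m (pd tc g) x"
proof -
  have e: "(\<lambda>y. \<Sum>j\<in>UNIV. pd j (\<lambda>y. cvf g y $ j) y) = (\<lambda>y. (- 2 * (real CARD('n) + 1)) * pd tc g y)"
    by (rule ext) (simp add: dv_cvf[OF g])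
  show ?thesis unfolding e
    by (subst pd_cmult) (auto intro: smooth_ldiff smooth_pd g)
qed

lemma pd_Yv_x: "pd j (\<lambda>y. Yv y \<xi> m) x = (\<Sum>l\<in>UNIV. b1 m l j * \<xi> $ l)"
  unfolding Yv_def
  by (simp add: pd_sum_sm pd_mult_sm smooth_mult smooth_Bm')

lemma B5': "(\<Sum>j\<in>UNIV. \<Sum>r\<in>UNIV. b1 j r l * \<xi> j * w r) = \<xi> l * w tc - \<xi> tc * w l"
proof -
  have "(\<Sum>j\<in>UNIV. \<Sum>r\<in>UNIV. b1 j r l * \<xi> j * w r) = (\<Sum>r\<in>UNIV. \<Sum>j\<in>UNIV. b1 j r l * \<xi> j * w r)"
    by (rule sum.swap)
  also have "\<dots> = - (\<Sum>r\<in>UNIV. \<Sum>j\<in>UNIV. b1 r j l * \<xi> j * w r)"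
    by (subst b1_antisym) (simp add: sum_negf)
  also have "\<dots> = \<xi> l * w tc - \<xi> tc * w l" unfolding B5 by simp
  finally show ?thesis .
qed

lemma sumBm_xi: "(\<Sum>m\<in>UNIV. Bm m r x * \<xi> $ m) = - Yv x \<xi> r"
  unfolding Yv_def by (subst Bm_antisym) (simp add: sum_negf)


lemma A_zero:
  fixes g :: "real^('n::finite idx) \<Rightarrow> real" and x \<xi> :: "real^('n idx)"
  assumes g: "smooth_fun g"
  shows "(\<Sum>m\<in>UNIV. Yv x \<xi> m * pd m (\<lambda>y. cvf g y $ j) x - cvf g x $ m * pd m (\<lambda>y. Yv y \<xi> j) x)
      + (\<Sum>l\<in>UNIV. (\<Sum>m\<in>UNIV. pd l (\<lambda>y. cvf g y $ m) x * \<xi> $ m) * Bm j l x)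
      + (\<delta> - (\<delta> + 1 / (real CARD('n) + 1))) * (\<Sum>j\<in>UNIV. pd j (\<lambda>y. cvf g y $ j) x) * Yv x \<xi> j = 0"
proof -
  define Y where "Y m = Yv x \<xi> m" for m
  define h where "h r = pd r g x" for r
  define hh where "hh m r = pd m (pd r g) x" for m r
  define Zc where "Zc j = cvf g x $ j" for j
  have hh_sym: "hh m r = hh r m" for m r unfolding hh_def by (rule clairaut[OF g])
  have dZ: "pd m (\<lambda>y. cvf g y $ j) x = - (\<Sum>r\<in>UNIV. b1 j r m * h r + Bm j r x * hh m r) - 2 * ind j * h m" for m j
    unfolding h_def hh_def by (rule dZ_cvf[OF g])
  have Zc: "Zc j = - (\<Sum>m\<in>UNIV. Bm j m x * h m) - 2 * ind j * g x" for j
    unfolding Zc_def h_def by (simp add: cvf_B)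
  have p1: "(\<Sum>m\<in>UNIV. Y m * pd m (\<lambda>y. cvf g y $ j) x)
      = - (h tc * Y j - ind j * (\<Sum>r\<in>UNIV. Y r * h r)) - (\<Sum>r\<in>UNIV. Bm j r x * (\<Sum>m\<in>UNIV. Y m * hh m r))
        - 2 * ind j * (\<Sum>m\<in>UNIV. Y m * h m)"
  proof -
    have "(\<Sum>m\<in>UNIV. Y m * pd m (\<lambda>y. cvf g y $ j) x)
       = - (\<Sum>m\<in>UNIV. \<Sum>r\<in>UNIV. Y m * b1 j r m * h r) - (\<Sum>m\<in>UNIV. \<Sum>r\<in>UNIV. Y m * (Bm j r x * hh m r))
         - 2 * ind j * (\<Sum>m\<in>UNIV. Y m * h m)"
      unfolding dZ by (simp add: sum.distrib sum_subtractf sum_negf sum_distrib_left algebra_simps)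
    also have "(\<Sum>m\<in>UNIV. \<Sum>r\<in>UNIV. Y m * b1 j r m * h r) = h tc * Y j - ind j * (\<Sum>r\<in>UNIV. Y r * h r)"
      by (simp add: B7)
    also have "(\<Sum>m\<in>UNIV. \<Sum>r\<in>UNIV. Y m * (Bm j r x * hh m r)) = (\<Sum>r\<in>UNIV. Bm j r x * (\<Sum>m\<in>UNIV. Y m * hh m r))"
      by (subst sum.swap) (simp add: sum_distrib_left algebra_simps)
    finally show ?thesis .
  qed
  have p2: "(\<Sum>m\<in>UNIV. Zc m * pd m (\<lambda>y. Yv y \<xi> j) x) = \<xi> $ tc * Zc j - ind j * (\<Sum>m\<in>UNIV. Zc m * \<xi> $ m)"
  proof -
    have "(\<Sum>m\<in>UNIV. Zc m * pd m (\<lambda>y. Yv y \<xi> j) x) = (\<Sum>m\<in>UNIV. \<Sum>l\<in>UNIV. Zc m * b1 j l m * \<xi> $ l)"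
      unfolding pd_Yv_x by (simp add: sum_distrib_left algebra_simps)
    also have "\<dots> = \<xi> $ tc * Zc j - ind j * (\<Sum>m\<in>UNIV. Zc m * \<xi> $ m)"
      by (simp add: B7)
    finally show ?thesis .
  qed
  have p3: "(\<Sum>m\<in>UNIV. Zc m * \<xi> $ m) = (\<Sum>r\<in>UNIV. Y r * h r) - 2 * g x * \<xi> $ tc"
  proof -
    have "(\<Sum>m\<in>UNIV. Zc m * \<xi> $ m) = - (\<Sum>m\<in>UNIV. \<Sum>r\<in>UNIV. h r * (Bm m r x * \<xi> $ m)) - 2 * g x * \<xi> $ tc"
      unfolding Zc by (simp add: sum_subtractf sum_negf sum_distrib_left sum_distrib_right algebra_simps)
    also have "(\<Sum>m\<in>UNIV. \<Sum>r\<in>UNIV. h r * (Bm m r x * \<xi> $ m)) = (\<Sum>r\<in>UNIV. h r * (\<Sum>m\<in>UNIV. Bm m r x * \<xi> $ m))"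
      by (subst sum.swap) (simp add: sum_distrib_left)
    also have "- (\<Sum>r\<in>UNIV. h r * (\<Sum>m\<in>UNIV. Bm m r x * \<xi> $ m)) - 2 * g x * \<xi> $ tc = (\<Sum>r\<in>UNIV. Y r * h r) - 2 * g x * \<xi> $ tc"
      unfolding sumBm_xi Y_def by (simp add: sum_negf algebra_simps)
    finally show ?thesis .
  qed
  have p4: "(\<Sum>m\<in>UNIV. pd l (\<lambda>y. cvf g y $ m) x * \<xi> $ m) = - \<xi> $ l * h tc + (\<Sum>r\<in>UNIV. Y r * hh l r) - \<xi> $ tc * h l" for l
  proof -
    have "(\<Sum>m\<in>UNIV. pd l (\<lambda>y. cvf g y $ m) x * \<xi> $ m)
       = - (\<Sum>m\<in>UNIV. \<Sum>r\<in>UNIV. b1 m r l * \<xi> $ m * h r) - (\<Sum>m\<in>UNIV. \<Sum>r\<in>UNIV. hh l r * (Bm m r x * \<xi> $ m))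
         - 2 * \<xi> $ tc * h l"
      unfolding dZ by (simp add: sum.distrib sum_subtractf sum_negf sum_distrib_left sum_distrib_right algebra_simps)
    also have "(\<Sum>m\<in>UNIV. \<Sum>r\<in>UNIV. b1 m r l * \<xi> $ m * h r) = \<xi> $ l * h tc - \<xi> $ tc * h l"
      by (rule B5'[of l "\<lambda>m. \<xi> $ m", simplified])
    also have "(\<Sum>m\<in>UNIV. \<Sum>r\<in>UNIV. hh l r * (Bm m r x * \<xi> $ m)) = (\<Sum>r\<in>UNIV. hh l r * (\<Sum>m\<in>UNIV. Bm m r x * \<xi> $ m))"
      by (subst sum.swap) (simp add: sum_distrib_left)
    also have "(\<Sum>r\<in>UNIV. hh l r * (\<Sum>m\<in>UNIV. Bm m r x * \<xi> $ m)) = - (\<Sum>r\<in>UNIV. Y r * hh l r)"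
      unfolding sumBm_xi Y_def by (simp add: sum_negf algebra_simps)
    finally show ?thesis by (simp add: algebra_simps)
  qed
  have p5: "(\<Sum>l\<in>UNIV. Bm j l x * h l) = - Zc j - 2 * ind j * g x"
    unfolding Zc by simp
  have p6: "(\<Sum>l\<in>UNIV. (\<Sum>m\<in>UNIV. pd l (\<lambda>y. cvf g y $ m) x * \<xi> $ m) * Bm j l x)
     = - h tc * Y j + (\<Sum>r\<in>UNIV. Bm j r x * (\<Sum>m\<in>UNIV. Y m * hh m r)) - \<xi> $ tc * (- Zc j - 2 * ind j * g x)"
  proof -
    have "(\<Sum>l\<in>UNIV. (\<Sum>m\<in>UNIV. pd l (\<lambda>y. cvf g y $ m) x * \<xi> $ m) * Bm j l x)
       = - h tc * (\<Sum>l\<in>UNIV. Bm j l x * \<xi> $ l) + (\<Sum>l\<in>UNIV. Bm j l x * (\<Sum>r\<in>UNIV. Y r * hh l r))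
         - \<xi> $ tc * (\<Sum>l\<in>UNIV. Bm j l x * h l)"
      unfolding p4 by (simp add: sum.distrib sum_subtractf sum_negf sum_distrib_left sum_distrib_right algebra_simps)
    also have "(\<Sum>l\<in>UNIV. Bm j l x * \<xi> $ l) = Y j" unfolding Y_def Yv_def ..
    also have "(\<Sum>l\<in>UNIV. Bm j l x * (\<Sum>r\<in>UNIV. Y r * hh l r)) = (\<Sum>r\<in>UNIV. Bm j r x * (\<Sum>m\<in>UNIV. Y m * hh m r))"
      by (simp add: hh_sym[of _ "_"] )
    also note p5
    finally show ?thesis .
  qed
  have dv: "(\<Sum>j\<in>UNIV. pd j (\<lambda>y. cvf g y $ j) x) = - 2 * (real CARD('n) + 1) * h tc"
    unfolding h_def by (rule dv_cvf[OF g])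
  have c: "(\<delta> - (\<delta> + 1 / (real CARD('n) + 1))) * (- 2 * (real CARD('n) + 1) * h tc) = 2 * h tc"
    using card_pos[where 'n='n] by (simp add: field_simps)
  show ?thesis
    unfolding sum_subtractf Y_def[symmetric] Zc_def[symmetric] p1 p2 p3 p6 dv c
    by (simp add: algebra_simps)
qed


lemma dZ_xi:
  fixes g :: "real^('n::finite idx) \<Rightarrow> real" and x \<xi> :: "real^('n idx)"
  assumes g: "smooth_fun g"
  shows "(\<Sum>m\<in>UNIV. pd l (\<lambda>y. cvf g y $ m) x * \<xi> $ m)
    = - \<xi> $ l * pd tc g x + (\<Sum>r\<in>UNIV. Yv x \<xi> r * pd l (pd r g) x) - \<xi> $ tc * pd l g x"
proof -
  define Y where "Y m = Yv x \<xi> m" for m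
  define h where "h r = pd r g x" for r
  define hh where "hh m r = pd m (pd r g) x" for m r
  have dZ: "pd m (\<lambda>y. cvf g y $ j) x = - (\<Sum>r\<in>UNIV. b1 j r m * h r + Bm j r x * hh m r) - 2 * ind j * h m" for m j
    unfolding h_def hh_def by (rule dZ_cvf[OF g])
  have "(\<Sum>m\<in>UNIV. pd l (\<lambda>y. cvf g y $ m) x * \<xi> $ m)
     = - (\<Sum>m\<in>UNIV. \<Sum>r\<in>UNIV. b1 m r l * \<xi> $ m * h r) - (\<Sum>m\<in>UNIV. \<Sum>r\<in>UNIV. hh l r * (Bm m r x * \<xi> $ m))
       - 2 * \<xi> $ tc * h l"
    unfolding dZ by (simp add: sum.distrib sum_subtractf sum_negf sum_distrib_left sum_distrib_right algebra_simps)
  also have "(\<Sum>m\<in>UNIV. \<Sum>r\<in>UNIV. b1 m r l * \<xi> $ m * h r) = \<xi> $ l * h tc - \<xi> $ tc * h l"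
    by (rule B5'[of l "\<lambda>m. \<xi> $ m", simplified])
  also have "(\<Sum>m\<in>UNIV. \<Sum>r\<in>UNIV. hh l r * (Bm m r x * \<xi> $ m)) = (\<Sum>r\<in>UNIV. hh l r * (\<Sum>m\<in>UNIV. Bm m r x * \<xi> $ m))"
    by (subst sum.swap) (simp add: sum_distrib_left)
  also have "(\<Sum>r\<in>UNIV. hh l r * (\<Sum>m\<in>UNIV. Bm m r x * \<xi> $ m)) = - (\<Sum>r\<in>UNIV. Y r * hh l r)"
    unfolding sumBm_xi Y_def by (simp add: sum_negf algebra_simps)
  finally show ?thesis unfolding Y_def h_def hh_def by (simp add: algebra_simps)
qed

lemma sum_cmult_inner: "(\<Sum>m\<in>A. f m * (c * g m)) = (c::real) * (\<Sum>m\<in>A. f m * g m)"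
  by (simp add: sum_distrib_left algebra_simps)

lemma S0_coeff:
  fixes g :: "real^('n::finite idx) \<Rightarrow> real" and x \<xi> :: "real^('n idx)" and \<delta> :: real and k :: nat
  assumes g: "smooth_fun g"
  defines "a \<equiv> 2 * (real CARD('n) + 1) * \<delta> - real k"
  shows "\<delta> * (\<Sum>m\<in>UNIV. Yv x \<xi> m * pd m (\<lambda>y. \<Sum>j\<in>UNIV. pd j (\<lambda>y. cvf g y $ j) y) x)
         + a * (\<Sum>j\<in>UNIV. pd tc (\<lambda>y. cvf g y $ j) x * \<xi> $ j)
         + a * (\<delta> - (\<delta> + 1 / (real CARD('n) + 1))) * \<xi> $ tc * (\<Sum>j\<in>UNIV. pd j (\<lambda>y. cvf g y $ j) x)
       = - real k * (\<Sum>m\<in>UNIV. Yv x \<xi> m * pd m (pd tc g) x)"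
proof -
  have sym: "pd tc (pd r g) x = pd r (pd tc g) x" for r by (rule clairaut[OF g])
  have c: "(\<delta> - (\<delta> + 1 / (real CARD('n) + 1))) * (- 2 * (real CARD('n) + 1) * pd tc g x) = 2 * pd tc g x"
    using card_pos[where 'n='n] by (simp add: field_simps)
  define C where "C = (\<Sum>m\<in>UNIV. Yv x \<xi> m * pd m (pd tc g) x)"
  have f1: "\<delta> * (\<Sum>m\<in>UNIV. Yv x \<xi> m * pd m (\<lambda>y. \<Sum>j\<in>UNIV. pd j (\<lambda>y. cvf g y $ j) y) x)
      = - 2 * (real CARD('n) + 1) * \<delta> * C"
    unfolding ddv_cvf[OF g] C_def sum_cmult_inner by (simp add: algebra_simps)
  have f2: "(\<Sum>j\<in>UNIV. pd tc (\<lambda>y. cvf g y $ j) x * \<xi> $ j) = C - 2 * \<xi> $ tc * pd tc g x"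
    unfolding dZ_xi[OF g] sym C_def by simp
  have f3: "a * (\<delta> - (\<delta> + 1 / (real CARD('n) + 1))) * \<xi> $ tc * (\<Sum>j\<in>UNIV. pd j (\<lambda>y. cvf g y $ j) x)
      = a * \<xi> $ tc * (2 * pd tc g x)"
  proof -
    have "a * (\<delta> - (\<delta> + 1 / (real CARD('n) + 1))) * \<xi> $ tc * (- 2 * (real CARD('n) + 1) * pd tc g x)
      = a * \<xi> $ tc * ((\<delta> - (\<delta> + 1 / (real CARD('n) + 1))) * (- 2 * (real CARD('n) + 1) * pd tc g x))"
      by (simp only: mult_ac)
    then show ?thesis unfolding dv_cvf[OF g] c .
  qed
  show ?thesis unfolding f1 f2 f3 C_def[symmetric] unfolding a_def by (simp add: algebra_simps)
qed

lemma E_coeff: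
  fixes g :: "real^('n::finite idx) \<Rightarrow> real" and x \<xi> :: "real^('n idx)"
  assumes g: "smooth_fun g"
  shows "(\<Sum>m\<in>UNIV. Yv x \<xi> m * (\<Sum>j\<in>UNIV. pd m (pd l (\<lambda>y. cvf g y $ j)) x * \<xi> $ j))
    = - \<xi> $ l * (\<Sum>m\<in>UNIV. Yv x \<xi> m * pd m (pd tc g) x)
      + (\<Sum>m\<in>UNIV. \<Sum>r\<in>UNIV. Yv x \<xi> m * Yv x \<xi> r * pd m (pd l (pd r g)) x)"
proof -
  define Y where "Y m = Yv x \<xi> m" for m
  define hh where "hh m r = pd m (pd r g) x" for m r
  define hhh where "hhh m l r = pd m (pd l (pd r g)) x" for m l r
  have hh_sym: "hh m r = hh r m" for m r unfolding hh_def by (rule clairaut[OF g])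
  have inner: "(\<Sum>j\<in>UNIV. pd m (pd l (\<lambda>y. cvf g y $ j)) x * \<xi> $ j)
      = - \<xi> $ l * hh m tc - \<xi> $ m * hh l tc + (\<Sum>r\<in>UNIV. Y r * hhh m l r)" for m
  proof -
    have "(\<Sum>j\<in>UNIV. pd m (pd l (\<lambda>y. cvf g y $ j)) x * \<xi> $ j)
      = - (\<Sum>j\<in>UNIV. \<Sum>r\<in>UNIV. b1 j r l * \<xi> $ j * hh m r) - (\<Sum>j\<in>UNIV. \<Sum>r\<in>UNIV. b1 j r m * \<xi> $ j * hh l r)
        - (\<Sum>j\<in>UNIV. \<Sum>r\<in>UNIV. hhh m l r * (Bm j r x * \<xi> $ j)) - 2 * \<xi> $ tc * hh m l"
      unfolding ddZ_cvf[OF g] hh_def hhh_def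
      by (simp add: sum.distrib sum_subtractf sum_negf sum_distrib_left sum_distrib_right algebra_simps)
    also have "(\<Sum>j\<in>UNIV. \<Sum>r\<in>UNIV. b1 j r l * \<xi> $ j * hh m r) = \<xi> $ l * hh m tc - \<xi> $ tc * hh m l"
      by (rule B5'[of l "\<lambda>m. \<xi> $ m", simplified])
    also have "(\<Sum>j\<in>UNIV. \<Sum>r\<in>UNIV. b1 j r m * \<xi> $ j * hh l r) = \<xi> $ m * hh l tc - \<xi> $ tc * hh l m"
      by (rule B5'[of m "\<lambda>m. \<xi> $ m", simplified])
    also have "(\<Sum>j\<in>UNIV. \<Sum>r\<in>UNIV. hhh m l r * (Bm j r x * \<xi> $ j)) = (\<Sum>r\<in>UNIV. hhh m l r * (\<Sum>j\<in>UNIV. Bm j r x * \<xi> $ j))"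
      by (subst sum.swap) (simp add: sum_distrib_left)
    also have "(\<Sum>r\<in>UNIV. hhh m l r * (\<Sum>j\<in>UNIV. Bm j r x * \<xi> $ j)) = - (\<Sum>r\<in>UNIV. Y r * hhh m l r)"
      unfolding sumBm_xi Y_def by (simp add: sum_negf algebra_simps)
    finally show ?thesis using hh_sym[of l m] by (simp add: algebra_simps)
  qed
  have "(\<Sum>m\<in>UNIV. Y m * (\<Sum>j\<in>UNIV. pd m (pd l (\<lambda>y. cvf g y $ j)) x * \<xi> $ j))
     = - \<xi> $ l * (\<Sum>m\<in>UNIV. Y m * hh m tc) - (\<Sum>m\<in>UNIV. Y m * \<xi> $ m) * hh l tc
       + (\<Sum>m\<in>UNIV. \<Sum>r\<in>UNIV. Y m * Y r * hhh m l r)"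
    unfolding inner by (simp add: sum.distrib sum_subtractf sum_negf sum_distrib_left sum_distrib_right algebra_simps)
  also have "(\<Sum>m\<in>UNIV. Y m * \<xi> $ m) = 0" unfolding Y_def by (rule Yv_xi)
  finally show ?thesis unfolding Y_def hh_def hhh_def by simp
qed

theorem stage2:
  fixes g :: "real^('n::finite idx) \<Rightarrow> real" and S :: "real^('n idx) \<Rightarrow> real^('n idx) \<Rightarrow> real"
    and \<delta> :: real and x \<xi> :: "real^('n idx)" and k :: nat
  assumes g: "smooth_fun g" and H: "\<And>y. hom_poly k (S y)" and Sm: "\<And>\<eta>. smooth_fun (\<lambda>y. S y \<eta>)"
  shows "Xop k \<delta> (Lder \<delta> (cvf g) S) x \<xi> - Lder (\<delta> + 1 / (real CARD('n) + 1)) (cvf g) (Xop k \<delta> S) x \<xi>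
    = - (\<Sum>l\<in>UNIV. (\<Sum>m\<in>UNIV. \<Sum>r\<in>UNIV. Yv x \<xi> m * Yv x \<xi> r * pd m (pd l (pd r g)) x) * pd l (S x) \<xi>)"
proof -
  define C where "C = (\<Sum>m\<in>UNIV. Yv x \<xi> m * pd m (pd tc g) x)"
  define T where "T l = (\<Sum>m\<in>UNIV. \<Sum>r\<in>UNIV. Yv x \<xi> m * Yv x \<xi> r * pd m (pd l (pd r g)) x)" for l
  have Zs: "\<And>j. smooth_fun (\<lambda>y. cvf g y $ j)" by (rule smooth_cvf[OF g])
  note st = stage1[OF Zs H Sm, where \<delta>'="\<delta> + 1 / (real CARD('n) + 1)" and \<delta>=\<delta> and x=x and \<xi>=\<xi>]
  have E: "(\<Sum>l\<in>UNIV. (\<Sum>m\<in>UNIV. Yv x \<xi> m * (\<Sum>j\<in>UNIV. pd m (pd l (\<lambda>y. cvf g y $ j)) x * \<xi> $ j)) * pd l (S x) \<xi>)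
     = - C * (\<Sum>l\<in>UNIV. \<xi> $ l * pd l (S x) \<xi>) + (\<Sum>l\<in>UNIV. T l * pd l (S x) \<xi>)"
    unfolding E_coeff[OF g] C_def[symmetric] T_def[symmetric]
    by (simp add: sum.distrib sum_distrib_left algebra_simps sum_subtractf sum_negf)
  show ?thesis
    unfolding st A_zero[OF g] S0_coeff[OF g] E euler[OF H] C_def[symmetric] T_def[symmetric]
    by (simp add: algebra_simps)
qed


lemma alpha_simps [simp]:
  "alpha y (qc i) = y $ pc i / 2" "alpha y (pc i) = - (y $ qc i) / 2" "alpha y tc = - 1 / 2"
  by (simp_all add: alpha_def qc_def pc_def tc_def)

lemma alpha_fun:
  "(\<lambda>y. alpha y (qc i)) = (\<lambda>y. (1/2) * y $ pc i)"
  "(\<lambda>y. alpha y (pc i)) = (\<lambda>y. (- 1/2) * y $ qc i)"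
  "(\<lambda>y. alpha y tc) = (\<lambda>y. - 1 / 2)"
  by (auto simp: fun_eq_iff)

lemma smooth_alpha [simp]: "smooth_fun (\<lambda>y. alpha y l)"
  by (cases l rule: idx_cases) (simp_all only: alpha_fun smooth_cmult smooth_coord smooth_const)

lemma pd_cdiv: "ldiff j F x \<Longrightarrow> pd j (\<lambda>y. F y / c) x = pd j F x / c"
  unfolding ldiff_def pd_def by (rule deriv_cdivide_right)

lemma ldiff_cdiv: "ldiff j F x \<Longrightarrow> ldiff j (\<lambda>y. F y / c) x"
  unfolding ldiff_def divide_inverse by (intro field_differentiable_mult field_differentiable_const)

lemma pd_half [simp]:
  fixes j :: "'a::finite" and x :: "real^'a"
  shows "pd m (\<lambda>y. y $ j / 2) x = (if j = m then 1/2 else 0)"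
    "pd m (\<lambda>y. - (y $ j / 2)) x = (if j = m then - 1/2 else 0)"
  by (simp_all add: pd_cdiv pd_minus ldiff_cdiv)

lemma pd_G:
  assumes Zs: "\<And>j. smooth_fun (\<lambda>y. Z y $ j)"
  shows "pd l (\<lambda>y. \<Sum>j\<in>UNIV. alpha y j * Z y $ j) x
    = (\<Sum>j\<in>UNIV. pd l (\<lambda>y. alpha y j) x * Z x $ j) + (\<Sum>j\<in>UNIV. alpha x j * pd l (\<lambda>y. Z y $ j) x)"
  by (simp add: pd_sum_sm pd_mult_sm smooth_mult Zs sum.distrib)

lemma LF:
  fixes Z :: "real^('n::finite idx) \<Rightarrow> real^('n idx)"
  assumes Zs: "\<And>j. smooth_fun (\<lambda>y. Z y $ j)"
  defines "G \<equiv> (\<lambda>y. \<Sum>j\<in>UNIV. alpha y j * Z y $ j)"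
  shows "Lie_form Z alpha x tc = pd tc G x"
    and "Lie_form Z alpha x (qc i) = pd (qc i) G x + Z x $ pc i"
    and "Lie_form Z alpha x (pc i) = pd (pc i) G x - Z x $ qc i"
  unfolding Lie_form_def G_def pd_G[OF Zs]
  by (simp_all add: sum_idx algebra_simps)

lemma alpha_cvf: "(\<Sum>j\<in>UNIV. alpha y j * cvf g y $ j) = g y"
  by (simp add: sum_idx cvf_comp sum_distrib_left sum_distrib_right sum.distrib algebra_simps sum_subtractf sum_negf)

lemma contact_cvf:
  fixes g :: "real^('n::finite idx) \<Rightarrow> real"
  assumes g: "smooth_fun g"
  shows "contact_vf (cvf g)"
  unfolding contact_vf_def
proof (intro conjI exI[of _ "\<lambda>x. - 2 * pd tc g x"] allI)
  show "smooth_vf (cvf g)" by (rule smooth_cvf_vf[OF g])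
  show "smooth_fun (\<lambda>x. - 2 * pd tc g x)" by (intro smooth_cmult smooth_pd g)
  fix x l
  have G: "(\<lambda>y. \<Sum>j\<in>UNIV. alpha y j * cvf g y $ j) = g" by (rule ext) (rule alpha_cvf)
  note LF' = LF[OF smooth_cvf[OF g], unfolded G]
  show "Lie_form (cvf g) alpha x l = - 2 * pd tc g x * alpha x l"
    by (cases l rule: idx_cases) (simp_all add: LF' cvf_comp algebra_simps)
qed

lemma contact_is_cvf:
  fixes Z :: "real^('n::finite idx) \<Rightarrow> real^('n idx)"
  assumes "contact_vf Z"
  defines "g \<equiv> (\<lambda>y. \<Sum>j\<in>UNIV. alpha y j * Z y $ j)"
  shows "smooth_fun g" and "Z = cvf g"
proof -
  have Zs: "\<And>j. smooth_fun (\<lambda>y. Z y $ j)" using assms(1) unfolding contact_vf_def smooth_vf_def by blast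
  obtain f where f: "\<And>x l. Lie_form Z alpha x l = f x * alpha x l"
    using assms(1) unfolding contact_vf_def by blast
  show gs: "smooth_fun g" unfolding g_def by (intro smooth_sum smooth_mult smooth_alpha Zs)
  have ft: "f x = - 2 * pd tc g x" for x
    using f[of x tc] LF(1)[OF Zs, of x] unfolding g_def by simp
  have zp: "Z x $ pc i = - pd (qc i) g x - x $ pc i * pd tc g x" for x i
    using f[of x "qc i"] LF(2)[OF Zs, of x i] ft[of x] unfolding g_def by (simp add: algebra_simps)
  have zq: "Z x $ qc i = pd (pc i) g x - x $ qc i * pd tc g x" for x i
    using f[of x "pc i"] LF(3)[OF Zs, of x i] ft[of x] unfolding g_def by (simp add: algebra_simps)
  have zt: "Z x $ tc = (\<Sum>i\<in>UNIV. x $ qc i * pd (qc i) g x + x $ pc i * pd (pc i) g x) - 2 * g x" for x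
  proof -
    have "g x = (\<Sum>i\<in>UNIV. x $ pc i / 2 * Z x $ qc i) + (\<Sum>i\<in>UNIV. - (x $ qc i) / 2 * Z x $ pc i) - Z x $ tc / 2"
      unfolding g_def by (simp add: sum_idx)
    then show ?thesis unfolding zp zq
      apply (simp add: sum_distrib_left sum_distrib_right sum.distrib sum_subtractf algebra_simps sum_negf)
      apply (simp only: sum_divide_distrib[symmetric])
      done
  qed
  show "Z = cvf g"
  proof (rule ext)
    fix x
    show "Z x = cvf g x" unfolding vec_eq_iff
    proof
      fix j show "Z x $ j = cvf g x $ j"
        by (cases j rule: idx_cases) (simp_all only: zp zq zt cvf_comp)
    qed
  qed
qed


definition aff :: "(real^'i::finite \<Rightarrow> real) \<Rightarrow> bool" where
  "aff F \<longleftrightarrow> (\<exists>c b. F = (\<lambda>y. c + (\<Sum>s\<in>UNIV. b s * y $ s)))"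

lemma aff_smooth: "aff F \<Longrightarrow> smooth_fun F"
  unfolding aff_def by (auto intro!: smooth_add smooth_const smooth_sum smooth_cmult smooth_coord)

lemma aff_pd: "aff F \<Longrightarrow> \<exists>c. pd l F = (\<lambda>y. c)"
proof -
  assume "aff F"
  then obtain c b where F: "F = (\<lambda>y. c + (\<Sum>s\<in>UNIV. b s * y $ s))" unfolding aff_def by blast
  have "pd l F y = b l" for y
  proof -
    have "pd l F y = pd l (\<lambda>y. (\<Sum>s\<in>UNIV. b s * y $ s)) y"
      unfolding F by (subst pd_add) (auto intro!: ldiff_sum ldiff_mult)
    also have "\<dots> = (\<Sum>s\<in>UNIV. b s * (if s = l then 1 else 0))"
      by (subst pd_sum) (auto intro!: ldiff_mult simp: pd_cmult)
    also have "\<dots> = b l" by simp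
    finally show ?thesis .
  qed
  then show ?thesis by blast
qed

lemma aff_const [simp]: "aff (\<lambda>y. c)"
  unfolding aff_def by (rule exI[of _ c], rule exI[of _ "\<lambda>s. 0"]) simp

lemma aff_coord [simp]: "aff (\<lambda>y. y $ r)"
  unfolding aff_def by (rule exI[of _ 0], rule exI[of _ "\<lambda>s. if s = r then 1 else 0"]) simp

lemma aff_add: "aff F \<Longrightarrow> aff G \<Longrightarrow> aff (\<lambda>y. F y + G y)"
proof -
  assume "aff F" "aff G"
  then obtain c b c' b' where "F = (\<lambda>y. c + (\<Sum>s\<in>UNIV. b s * y $ s))" "G = (\<lambda>y. c' + (\<Sum>s\<in>UNIV. b' s * y $ s))"
    unfolding aff_def by blast
  then show ?thesis unfolding aff_def
    by (intro exI[of _ "c + c'"] exI[of _ "\<lambda>s. b s + b' s"]) (auto simp: fun_eq_iff algebra_simps sum.distrib)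
qed

lemma aff_cmult: "aff F \<Longrightarrow> aff (\<lambda>y. a * F y)"
proof -
  assume "aff F"
  then obtain c b where "F = (\<lambda>y. c + (\<Sum>s\<in>UNIV. b s * y $ s))" unfolding aff_def by blast
  then show ?thesis unfolding aff_def
    by (intro exI[of _ "a * c"] exI[of _ "\<lambda>s. a * b s"]) (auto simp: fun_eq_iff algebra_simps sum_distrib_left)
qed

lemma aff_sum: "(\<And>i. i \<in> A \<Longrightarrow> aff (F i)) \<Longrightarrow> aff (\<lambda>y. \<Sum>i\<in>A. F i y)"
proof (induction A rule: infinite_finite_induct)
  case (insert a A)
  have e: "(\<lambda>y. \<Sum>i\<in>insert a A. F i y) = (\<lambda>y. F a y + (\<Sum>i\<in>A. F i y))"
    using insert(1,2) by (simp add: sum.insert)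
  show ?case unfolding e using insert by (intro aff_add) auto
qed simp_all

definition quad :: "(real^'i::finite \<Rightarrow> real) \<Rightarrow> bool" where
  "quad Q \<longleftrightarrow> smooth_fun Q \<and> (\<forall>r. aff (pd r Q))"

lemma quad_add: "quad P \<Longrightarrow> quad Q \<Longrightarrow> quad (\<lambda>y. P y + Q y)"
proof -
  assume P: "quad P" and Q: "quad Q"
  have "pd r (\<lambda>y. P y + Q y) = (\<lambda>y. pd r P y + pd r Q y)" for r
    using P Q unfolding quad_def by (auto intro!: pd_add_sm)
  then show ?thesis using P Q unfolding quad_def by (auto intro: smooth_add aff_add)
qed

lemma quad_sum: "(\<And>i. i \<in> A \<Longrightarrow> quad (F i)) \<Longrightarrow> quad (\<lambda>y. \<Sum>i\<in>A. F i y)"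
proof (induction A rule: infinite_finite_induct)
  case (insert a A)
  have e: "(\<lambda>y. \<Sum>i\<in>insert a A. F i y) = (\<lambda>y. F a y + (\<Sum>i\<in>A. F i y))"
    using insert(1,2) by (simp add: sum.insert)
  show ?case unfolding e using insert by (intro quad_add) auto
next
  case (infinite A) then show ?case by (simp add: quad_def pd_const_fun)
next
  case empty then show ?case by (simp add: quad_def pd_const_fun)
qed

lemma quad_mult: "aff F \<Longrightarrow> aff G \<Longrightarrow> quad (\<lambda>y. F y * G y)"
proof -
  assume F: "aff F" and G: "aff G"
  have sF: "smooth_fun F" and sG: "smooth_fun G" using F G by (auto intro: aff_smooth)
  show ?thesis unfolding quad_def
  proof (intro conjI allI)
    show "smooth_fun (\<lambda>y. F y * G y)" using sF sG by (rule smooth_mult)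
    fix r
    obtain a where a: "pd r F = (\<lambda>y. a)" using aff_pd[OF F] by blast
    obtain b where b: "pd r G = (\<lambda>y. b)" using aff_pd[OF G] by blast
    have "pd r (\<lambda>y. F y * G y) = (\<lambda>y. a * G y + b * F y)"
    proof
      fix y show "pd r (\<lambda>y. F y * G y) y = a * G y + b * F y"
        using pd_mult_sm[OF sF sG, of r y] fun_cong[OF a, of y] fun_cong[OF b, of y] by simp
    qed
    then show "aff (pd r (\<lambda>y. F y * G y))" using F G by (auto intro: aff_add aff_cmult)
  qed
qed

lemma quad_third: "quad Q \<Longrightarrow> pd m (pd l (pd r Q)) x = 0"
proof -
  assume "quad Q"
  then have "aff (pd r Q)" unfolding quad_def by blast
  then obtain c where "pd l (pd r Q) = (\<lambda>y. c)" using aff_pd by blast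
  then show ?thesis by simp
qed

lemma alpha_E: "(\<Sum>l\<in>UNIV. alpha y l * y $ l) = - (y $ tc) / 2"
  by (simp add: sum_idx algebra_simps sum.distrib sum_negf)

lemma aff_half:
  "aff (\<lambda>y. y $ j / 2)" "aff (\<lambda>y. - (y $ j / 2))"
  unfolding aff_def
  by (rule exI[of _ 0], rule exI[of _ "\<lambda>s. if s = j then 1/2 else 0"], simp add: fun_eq_iff)
     (rule exI[of _ 0], rule exI[of _ "\<lambda>s. if s = j then -1/2 else 0"], simp add: fun_eq_iff)

lemma aff_alpha: "aff (\<lambda>y. alpha y l)"
  by (cases l rule: idx_cases) (simp_all add: aff_half)

lemma sl_quad:
  fixes Z :: "real^('n::finite idx) \<Rightarrow> real^('n idx)"
  assumes "sl_vf Z"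
  shows "quad (\<lambda>y. \<Sum>j\<in>UNIV. alpha y j * Z y $ j)"
proof -
  obtain c A \<eta> where Z: "\<And>x. Z x = c + A *v x + (\<eta> \<bullet> x) *\<^sub>R x"
    using assms unfolding sl_vf_def by blast
  have e: "(\<lambda>y. \<Sum>j\<in>UNIV. alpha y j * Z y $ j) =
    (\<lambda>y. (\<Sum>j\<in>UNIV. alpha y j * (c $ j + (\<Sum>r\<in>UNIV. A $ j $ r * y $ r))) + (\<Sum>r\<in>UNIV. \<eta> $ r * y $ r) * ((- 1/2) * y $ tc))"
  proof
    fix y
    have "(\<Sum>j\<in>UNIV. alpha y j * Z y $ j) = (\<Sum>j\<in>UNIV. alpha y j * (c $ j + (\<Sum>r\<in>UNIV. A $ j $ r * y $ r))
        + (\<Sum>r\<in>UNIV. \<eta> $ r * y $ r) * (alpha y j * y $ j))"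
      by (rule sum.cong) (simp_all add: Z matrix_vector_mult_def inner_vec_def algebra_simps)
    also have "\<dots> = (\<Sum>j\<in>UNIV. alpha y j * (c $ j + (\<Sum>r\<in>UNIV. A $ j $ r * y $ r)))
        + (\<Sum>r\<in>UNIV. \<eta> $ r * y $ r) * (\<Sum>j\<in>UNIV. alpha y j * y $ j)"
      by (simp add: sum.distrib sum_distrib_left)
    finally show "(\<Sum>j\<in>UNIV. alpha y j * Z y $ j) = (\<Sum>j\<in>UNIV. alpha y j * (c $ j + (\<Sum>r\<in>UNIV. A $ j $ r * y $ r)))
        + (\<Sum>r\<in>UNIV. \<eta> $ r * y $ r) * ((- 1/2) * y $ tc)"
      unfolding alpha_E by simp
  qed
  show ?thesis unfolding e
    by (intro quad_add quad_sum quad_mult aff_alpha aff_add aff_const aff_sum aff_cmult aff_coord)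
qed


lemma pd_pow_coord:
  fixes y :: "real^'a::finite"
  shows "pd r (\<lambda>y. (y $ a) ^ n) y = (if a = r then real n * (y $ a) ^ (n - 1) else 0)"
proof (cases "a = r")
  case True
  have "pd r (\<lambda>y. (y $ a) ^ n) y = deriv (\<lambda>s. (y $ a + s) ^ n) 0"
    unfolding pd_def line_coord using True by simp
  also have "\<dots> = real n * (y $ a) ^ (n - 1)"
    by (rule DERIV_imp_deriv) (auto intro!: derivative_eq_intros simp: Suc_diff_1 One_nat_def)
  finally show ?thesis using True by simp
next
  case False
  then show ?thesis unfolding pd_def line_coord by simp
qed

lemma pd_cpow_coord:
  fixes y :: "real^'a::finite"
  shows "pd r (\<lambda>y. c * (y $ a) ^ n) y = (if a = r then c * real n * (y $ a) ^ (n - 1) else 0)"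
  by (subst pd_cmult) (auto intro!: smooth_ldiff smooth_pow smooth_coord simp: pd_pow_coord)

lemma third_cube:
  fixes x :: "real^'a::finite"
  shows "pd m (pd l (pd r (\<lambda>y. (y $ a) ^ 3))) x
    = (if m = a then 1 else 0) * ((if l = a then 1 else 0) * ((if r = a then 1 else 0) * 6))"
proof (cases "r = a")
  case False
  have "pd r (\<lambda>y. (y $ a) ^ 3) = (\<lambda>y. 0)" using False by (auto simp: fun_eq_iff pd_pow_coord)
  then show ?thesis using False by (simp add: pd_const_fun)
next
  case True
  have e1: "pd r (\<lambda>y. (y $ a) ^ 3) = (\<lambda>y. 3 * (y $ a) ^ 2)" using True by (auto simp: fun_eq_iff pd_pow_coord)
  show ?thesis
  proof (cases "l = a")
    case False
    have "pd l (\<lambda>y. 3 * (y $ a) ^ 2) = (\<lambda>y. 0)" using False by (auto simp: fun_eq_iff pd_cpow_coord)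
    then show ?thesis using False unfolding e1 by (simp add: pd_const_fun)
  next
    case True
    have e2: "pd l (\<lambda>y. 3 * (y $ a) ^ 2) = (\<lambda>y. 6 * y $ a)" using True by (auto simp: fun_eq_iff pd_cpow_coord)
    have e3: "pd m (\<lambda>y. 6 * y $ a) x = (if m = a then 6 else 0)"
      by (auto simp: pd_cmult)
    show ?thesis using \<open>r = a\<close> True unfolding e1 e2 e3 by simp
  qed
qed

theorem mainTheorem3:
  fixes k :: nat and \<delta> :: real
  shows "(\<forall>(Z :: real^('n::finite idx) \<Rightarrow> real^('n idx)) S.
            sp_vf Z \<longrightarrow> symbol k S \<longrightarrow>
            Xop k \<delta> (Lder \<delta> Z S) = Lder (\<delta> + 1 / (real CARD('n) + 1)) Z (Xop k \<delta> S))
       \<and> (k = 0 \<longrightarrow>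
            (\<forall>(Z :: real^('n idx) \<Rightarrow> real^('n idx)) S.
              contact_vf Z \<longrightarrow> symbol k S \<longrightarrow>
              Xop k \<delta> (Lder \<delta> Z S) = Lder (\<delta> + 1 / (real CARD('n) + 1)) Z (Xop k \<delta> S)))
       \<and> (k \<ge> 1 \<longrightarrow>
            (\<forall>i :: 'n. contact_vf (cvf (\<lambda>x. (x $ qc i) ^ 3)) \<and>
              (\<exists>S. symbol k S \<and>
                 Xop k \<delta> (Lder \<delta> (cvf (\<lambda>x. (x $ qc i) ^ 3)) S)
                   \<noteq> Lder (\<delta> + 1 / (real CARD('n) + 1)) (cvf (\<lambda>x. (x $ qc i) ^ 3)) (Xop k \<delta> S))))"
proof (intro conjI allI impI)
  fix Z :: "real^('n::finite idx) \<Rightarrow> real^('n idx)" and S :: "real^('n idx) \<Rightarrow> real^('n idx) \<Rightarrow> real"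
  assume sp: "sp_vf Z" and sy: "symbol k S"
  have H: "\<And>y. hom_poly k (S y)" and Sm: "\<And>\<eta>. smooth_fun (\<lambda>y. S y \<eta>)"
    using sy unfolding symbol_def by auto
  have c: "contact_vf Z" and sl: "sl_vf Z" using sp unfolding sp_vf_def by auto
  define g where "g = (\<lambda>y. \<Sum>j\<in>UNIV. alpha y j * Z y $ j)"
  have gs: "smooth_fun g" and Zg: "Z = cvf g" using contact_is_cvf[OF c] unfolding g_def by auto
  have q: "quad g" unfolding g_def by (rule sl_quad[OF sl])
  show "Xop k \<delta> (Lder \<delta> Z S) = Lder (\<delta> + 1 / (real CARD('n) + 1)) Z (Xop k \<delta> S)"
  proof (intro ext)
    fix x \<xi>
    have "Xop k \<delta> (Lder \<delta> Z S) x \<xi> - Lder (\<delta> + 1 / (real CARD('n) + 1)) Z (Xop k \<delta> S) x \<xi> = 0"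
      unfolding Zg stage2[OF gs H Sm] quad_third[OF q] by simp
    then show "Xop k \<delta> (Lder \<delta> Z S) x \<xi> = Lder (\<delta> + 1 / (real CARD('n) + 1)) Z (Xop k \<delta> S) x \<xi>"
      by simp
  qed
next
  fix Z :: "real^('n::finite idx) \<Rightarrow> real^('n idx)" and S :: "real^('n idx) \<Rightarrow> real^('n idx) \<Rightarrow> real"
  assume k0: "k = 0" and c: "contact_vf Z" and sy: "symbol k S"
  have H: "\<And>y. hom_poly k (S y)" and Sm: "\<And>\<eta>. smooth_fun (\<lambda>y. S y \<eta>)"
    using sy unfolding symbol_def by auto
  define g where "g = (\<lambda>y. \<Sum>j\<in>UNIV. alpha y j * Z y $ j)"
  have gs: "smooth_fun g" and Zg: "Z = cvf g" using contact_is_cvf[OF c] unfolding g_def by auto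
  have E0: "pd l (S x) \<xi> = 0" for l x \<xi>
  proof -
    obtain c where "S x = (\<lambda>\<xi>. c)" using H[of x] k0 by auto
    then show ?thesis by simp
  qed
  show "Xop k \<delta> (Lder \<delta> Z S) = Lder (\<delta> + 1 / (real CARD('n) + 1)) Z (Xop k \<delta> S)"
  proof (intro ext)
    fix x \<xi>
    have "Xop k \<delta> (Lder \<delta> Z S) x \<xi> - Lder (\<delta> + 1 / (real CARD('n) + 1)) Z (Xop k \<delta> S) x \<xi> = 0"
      unfolding Zg stage2[OF gs H Sm] E0 by simp
    then show "Xop k \<delta> (Lder \<delta> Z S) x \<xi> = Lder (\<delta> + 1 / (real CARD('n) + 1)) Z (Xop k \<delta> S) x \<xi>"
      by simp
  qed
next
  fix i :: 'n
  define g :: "real^('n idx) \<Rightarrow> real" where "g = (\<lambda>x. (x $ qc i) ^ 3)"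
  have gs: "smooth_fun g" unfolding g_def by (intro smooth_pow smooth_coord)
  show "contact_vf (cvf (\<lambda>x. (x $ qc i) ^ 3))" using contact_cvf[OF gs] unfolding g_def .
next
  fix i :: 'n
  assume k1: "1 \<le> k"
  define g :: "real^('n idx) \<Rightarrow> real" where "g = (\<lambda>x. (x $ qc i) ^ 3)"
  have gs: "smooth_fun g" unfolding g_def by (intro smooth_pow smooth_coord)
  define S :: "real^('n idx) \<Rightarrow> real^('n idx) \<Rightarrow> real" where "S = (\<lambda>y \<eta>. (\<eta> $ qc i) ^ k)"
  have H: "\<And>y. hom_poly k (S y)" unfolding S_def by (rule hom_poly_pow)
  have Sm: "\<And>\<eta>. smooth_fun (\<lambda>y. S y \<eta>)" unfolding S_def by simp
  have sy: "symbol k S" unfolding symbol_def using H Sm by blast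
  define x0 :: "real^('n idx)" where "x0 = 0"
  define \<xi>0 :: "real^('n idx)" where "\<xi>0 = axis (pc i) 1 + axis (qc i) 1"
  have xi_q: "\<xi>0 $ qc i = 1" and xi_p: "\<xi>0 $ pc i = 1" unfolding \<xi>0_def by (simp_all add: axis_nth)
  have Yq: "Yv x0 \<xi>0 (qc i) = -1" unfolding x0_def using xi_p by simp
  have Eq: "pd l (S x0) \<xi>0 = (if l = qc i then real k else 0)" for l
    unfolding S_def using xi_q by (auto simp: pd_pow_coord)
  have T: "(\<Sum>m\<in>UNIV. \<Sum>r\<in>UNIV. Yv x0 \<xi>0 m * Yv x0 \<xi>0 r * pd m (pd l (pd r g)) x0)
      = (if l = qc i then 6 else 0)" for l
    unfolding g_def third_cube using Yq by (simp add: mult_ac)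
  have D: "Xop k \<delta> (Lder \<delta> (cvf g) S) x0 \<xi>0 - Lder (\<delta> + 1 / (real CARD('n) + 1)) (cvf g) (Xop k \<delta> S) x0 \<xi>0
      = - 6 * real k"
    unfolding stage2[OF gs H Sm] T Eq by simp
  show "\<exists>S. symbol k S \<and> Xop k \<delta> (Lder \<delta> (cvf (\<lambda>x. (x $ qc i) ^ 3)) S)
        \<noteq> Lder (\<delta> + 1 / (real CARD('n) + 1)) (cvf (\<lambda>x. (x $ qc i) ^ 3)) (Xop k \<delta> S)"
  proof (intro exI conjI)
    show "symbol k S" by (rule sy)
    show "Xop k \<delta> (Lder \<delta> (cvf (\<lambda>x. (x $ qc i) ^ 3)) S)
        \<noteq> Lder (\<delta> + 1 / (real CARD('n) + 1)) (cvf (\<lambda>x. (x $ qc i) ^ 3)) (Xop k \<delta> S)"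
    proof
      assume eq: "Xop k \<delta> (Lder \<delta> (cvf (\<lambda>x. (x $ qc i) ^ 3)) S)
        = Lder (\<delta> + 1 / (real CARD('n) + 1)) (cvf (\<lambda>x. (x $ qc i) ^ 3)) (Xop k \<delta> S)"
      have "- 6 * real k = 0" using D eq unfolding g_def by simp
      then show False using k1 by simp
    qed
  qed
qed

end
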